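(* Let $p$ be an odd prime and let $G$ be an extraspecial $p$-group. Then the Amit–Ashurst conjecture holds for $G$.
   Context: A finite $p$-group $G$ is special if $G'=\Phi(G)=Z(G)$ and both $Z(G)$ and $G/Z(G)$ are elementary abelian; it is extraspecial if moreover $Z(G)$ is cyclic (of order $p$). For a word $w\in F_k$ (free group on $x_1,\dots,x_k$), $w(G)$ is the image of the word map $G^k\to G$ and $P_{w,G}(g):=|\{(g_1,\dots,g_k)\in G^k: w(g_1,\dots,g_k)=g\}|/|G|^k$. The Amit–Ashurst conjecture holds for $G$ if for every $k\ge1$, every $w\in F_k$ and every $g\in w(G)$, $P_{w,G}(g)\ge|G|^{-1}$. *)

theory Defs
  imports "HOL-Algebra.Algebra"
begin

definition grp_center :: "('a, 'b) monoid_scheme \<Rightarrow> 'a set" where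
  "grp_center G = {z \<in> carrier G. \<forall>x \<in> carrier G. z \<otimes>\<^bsub>G\<^esub> x = x \<otimes>\<^bsub>G\<^esub> z}"

text \<open>Maximal subgroups and the Frattini subgroup (intersection of all maximal
  subgroups; equal to the whole group if there are none).\<close>
definition maximal_subgroup :: "'a set \<Rightarrow> ('a, 'b) monoid_scheme \<Rightarrow> bool" where
  "maximal_subgroup H G \<longleftrightarrow> subgroup H G \<and> H \<noteq> carrier G \<and>
     (\<forall>K. subgroup K G \<and> H \<subseteq> K \<longrightarrow> K = H \<or> K = carrier G)"

definition frattini :: "('a, 'b) monoid_scheme \<Rightarrow> 'a set" where
  "frattini G = carrier G \<inter> \<Inter> {H. maximal_subgroup H G}"

definition p_group :: "nat \<Rightarrow> ('a, 'b) monoid_scheme \<Rightarrow> bool" where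
  "p_group p G \<longleftrightarrow> group G \<and> finite (carrier G) \<and> (\<exists>n. order G = p ^ n)"

definition elem_abelian :: "nat \<Rightarrow> ('a, 'b) monoid_scheme \<Rightarrow> bool" where
  "elem_abelian p A \<longleftrightarrow> comm_group A \<and> (\<forall>x \<in> carrier A. x [^]\<^bsub>A\<^esub> p = \<one>\<^bsub>A\<^esub>)"

definition special_p_group :: "nat \<Rightarrow> ('a, 'b) monoid_scheme \<Rightarrow> bool" where
  "special_p_group p G \<longleftrightarrow> p_group p G \<and>
     derived G (carrier G) = frattini G \<and> frattini G = grp_center G \<and>
     elem_abelian p (subgroup_generated G (grp_center G)) \<and>
     elem_abelian p (G Mod grp_center G)"

definition extraspecial_p_group :: "nat \<Rightarrow> ('a, 'b) monoid_scheme \<Rightarrow> bool" where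
  "extraspecial_p_group p G \<longleftrightarrow> special_p_group p G \<and>
     cyclic_group (subgroup_generated G (grp_center G)) \<and> card (grp_center G) = p"

text \<open>Words in the free group F_k: a word is represented by a list of letters
  (i, e) standing for x_i (e = True) or x_i^{-1} (e = False), with i < k.
  Every element of F_k is represented by such a list, and the word map depends
  only on the represented element.\<close>
definition is_word :: "nat \<Rightarrow> (nat \<times> bool) list \<Rightarrow> bool" where
  "is_word k w \<longleftrightarrow> (\<forall>l \<in> set w. fst l < k)"

fun word_eval :: "('a, 'b) monoid_scheme \<Rightarrow> (nat \<times> bool) list \<Rightarrow> (nat \<Rightarrow> 'a) \<Rightarrow> 'a" where
  "word_eval G [] g = \<one>\<^bsub>G\<^esub>"
| "word_eval G ((i, e) # w) g =
     (if e then g i else inv\<^bsub>G\<^esub> (g i)) \<otimes>\<^bsub>G\<^esub> word_eval G w g"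

text \<open>G^k as extensional functions on {0..<k}.\<close>
definition tuples :: "('a, 'b) monoid_scheme \<Rightarrow> nat \<Rightarrow> (nat \<Rightarrow> 'a) set" where
  "tuples G k = PiE {..<k} (\<lambda>_. carrier G)"

definition word_image :: "('a, 'b) monoid_scheme \<Rightarrow> nat \<Rightarrow> (nat \<times> bool) list \<Rightarrow> 'a set" where
  "word_image G k w = (\<lambda>t. word_eval G w t) ` tuples G k"

definition word_prob :: "('a, 'b) monoid_scheme \<Rightarrow> nat \<Rightarrow> (nat \<times> bool) list \<Rightarrow> 'a \<Rightarrow> real" where
  "word_prob G k w x = real (card {t \<in> tuples G k. word_eval G w t = x}) / real (card (carrier G)) ^ k"

definition amit_ashurst :: "('a, 'b) monoid_scheme \<Rightarrow> bool" where
  "amit_ashurst G \<longleftrightarrow> (\<forall>k \<ge> 1. \<forall>w. is_word k w \<longrightarrow>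
     (\<forall>x \<in> word_image G k w. word_prob G k w x \<ge> 1 / real (card (carrier G))))"

end

theory Submission
  imports Defs
begin
lemma center_sub: "grp_center G \<subseteq> carrier G" by (auto simp: grp_center_def)

lemma center_memD: "h \<in> grp_center G \<Longrightarrow> x \<in> carrier G \<Longrightarrow> h \<otimes>\<^bsub>G\<^esub> x = x \<otimes>\<^bsub>G\<^esub> h"
  unfolding grp_center_def by blast
lemma center_memI: "h \<in> carrier G \<Longrightarrow> (\<And>x. x \<in> carrier G \<Longrightarrow> h \<otimes>\<^bsub>G\<^esub> x = x \<otimes>\<^bsub>G\<^esub> h) \<Longrightarrow> h \<in> grp_center G"
  unfolding grp_center_def by blast

lemma (in group) center_subgroup: "subgroup (grp_center G) G"
proof (rule subgroupI)
  show "grp_center G \<subseteq> carrier G" by (rule center_sub)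
  have "\<one> \<in> grp_center G" unfolding grp_center_def by simp
  then show "grp_center G \<noteq> {}" by blast
  show "inv a \<in> grp_center G" if a: "a \<in> grp_center G" for a
  proof -
    have ac: "a \<in> carrier G" using center_sub[THEN subsetD, OF a] .
    have com: "\<And>x. x \<in> carrier G \<Longrightarrow> a \<otimes> x = x \<otimes> a" using a by (rule center_memD)
    have "inv a \<otimes> x = x \<otimes> inv a" if x: "x \<in> carrier G" for x
    proof -
      have "a \<otimes> (inv a \<otimes> x) = x" using ac x by (simp add: m_assoc[symmetric])
      also have "x = a \<otimes> (x \<otimes> inv a)" using com[OF x] x ac by (simp add: m_assoc[symmetric]) (simp add: m_assoc)
      finally have "a \<otimes> (inv a \<otimes> x) = a \<otimes> (x \<otimes> inv a)" .
      then show ?thesis using ac x by simp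
    qed
    then show ?thesis using ac by (intro center_memI) auto
  qed
  show "a \<otimes> b \<in> grp_center G" if a: "a \<in> grp_center G" and b: "b \<in> grp_center G" for a b
  proof -
    have ac: "a \<in> carrier G" using center_sub[THEN subsetD, OF a] .
    have ca: "\<And>x. x \<in> carrier G \<Longrightarrow> a \<otimes> x = x \<otimes> a" using a by (rule center_memD)
    have bc: "b \<in> carrier G" using center_sub[THEN subsetD, OF b] .
    have cb: "\<And>x. x \<in> carrier G \<Longrightarrow> b \<otimes> x = x \<otimes> b" using b by (rule center_memD)
    have "a \<otimes> b \<otimes> x = x \<otimes> (a \<otimes> b)" if x: "x \<in> carrier G" for x
    proof -
      have "a \<otimes> b \<otimes> x = a \<otimes> (x \<otimes> b)" using cb[OF x] x ac bc by (simp add: m_assoc)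
      also have "\<dots> = (x \<otimes> a) \<otimes> b" using ca[OF x] x ac bc by (simp add: m_assoc[symmetric])
      finally show ?thesis using x ac bc by (simp add: m_assoc)
    qed
    then show ?thesis using ac bc by (intro center_memI) auto
  qed
qed

lemma (in group) center_normal: "grp_center G \<lhd> G"
proof -
  have H: "x \<otimes> h \<otimes> inv x \<in> grp_center G" if "x \<in> carrier G" "h \<in> grp_center G" for x h
  proof -
    have hc: "h \<in> carrier G" using center_sub[THEN subsetD, OF that(2)] .
    have hx: "x \<otimes> h = h \<otimes> x" using center_memD[OF that(2) that(1)] by simp
    have "x \<otimes> h \<otimes> inv x = h \<otimes> x \<otimes> inv x" using hx by simp
    also have "\<dots> = h \<otimes> (x \<otimes> inv x)" using hc that(1) by (simp add: m_assoc)
    finally have "x \<otimes> h \<otimes> inv x = h" using hc that(1) by simp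
    then show ?thesis using that by simp
  qed
  show ?thesis unfolding normal_inv_iff using center_subgroup H by blast
qed

definition cm :: "('a, 'b) monoid_scheme \<Rightarrow> 'a \<Rightarrow> 'a \<Rightarrow> 'a" where
  "cm G a b = inv\<^bsub>G\<^esub> a \<otimes>\<^bsub>G\<^esub> inv\<^bsub>G\<^esub> b \<otimes>\<^bsub>G\<^esub> a \<otimes>\<^bsub>G\<^esub> b"

locale xsp = group G for G (structure) +
  fixes p :: nat
  assumes prime_p: "Factorial_Ring.prime p" and odd_p: "odd p" and fin: "finite (carrier G)"
  and cmZ: "\<And>a b. a \<in> carrier G \<Longrightarrow> b \<in> carrier G \<Longrightarrow> cm G a b \<in> grp_center G"
  and powZ: "\<And>x. x \<in> carrier G \<Longrightarrow> x [^] p \<in> grp_center G"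
  and Zp: "\<And>z. z \<in> grp_center G \<Longrightarrow> z [^] p = \<one>"
  and cardZ: "card (grp_center G) = p"
  and big: "2 * p \<le> card (carrier G)"
begin

abbreviation "Z \<equiv> grp_center G"

lemma Zc: "z \<in> Z \<Longrightarrow> z \<in> carrier G" by (rule center_sub[THEN subsetD])
lemma Zcom: "z \<in> Z \<Longrightarrow> x \<in> carrier G \<Longrightarrow> z \<otimes> x = x \<otimes> z" by (rule center_memD)
lemma Zsub: "subgroup Z G" by (rule center_subgroup)
lemma Z_mult: "a \<in> Z \<Longrightarrow> b \<in> Z \<Longrightarrow> a \<otimes> b \<in> Z" by (rule subgroup.m_closed[OF Zsub])
lemma Z_inv: "a \<in> Z \<Longrightarrow> inv a \<in> Z" by (rule subgroup.m_inv_closed[OF Zsub])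
lemma Z_one: "\<one> \<in> Z" by (rule subgroup.one_closed[OF Zsub])
lemma Z_pow: "a \<in> Z \<Longrightarrow> a [^] (n::nat) \<in> Z"
proof (induction n)
  case 0 then show ?case using Z_one by (simp only: nat_pow_0)
next
  case (Suc n) then show ?case using Z_mult[OF Suc.IH Suc.prems] by (simp only: nat_pow_Suc)
qed
lemma Z_ipow: "a \<in> Z \<Longrightarrow> a [^] (n::int) \<in> Z"
proof -
  assume a: "a \<in> Z"
  show ?thesis unfolding int_pow_def2 using Z_pow[OF a] Z_inv[OF Z_pow[OF a]] by (simp del: pow_nat)
qed

lemma cm_closed[simp]: "a \<in> carrier G \<Longrightarrow> b \<in> carrier G \<Longrightarrow> cm G a b \<in> carrier G"
  by (simp add: cm_def)

lemma mlinv[simp]: "x \<in> carrier G \<Longrightarrow> y \<in> carrier G \<Longrightarrow> x \<otimes> (inv x \<otimes> y) = y"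
  by (simp add: m_assoc[symmetric])
lemma minvl[simp]: "x \<in> carrier G \<Longrightarrow> y \<in> carrier G \<Longrightarrow> inv x \<otimes> (x \<otimes> y) = y"
  by (simp add: m_assoc[symmetric])
lemma lcan: "x \<in> carrier G \<Longrightarrow> y \<in> carrier G \<Longrightarrow> z \<in> carrier G \<Longrightarrow> x \<otimes> y = x \<otimes> z \<Longrightarrow> y = z"
  by (metis minvl)
lemma rcan: "x \<in> carrier G \<Longrightarrow> y \<in> carrier G \<Longrightarrow> z \<in> carrier G \<Longrightarrow> y \<otimes> x = z \<otimes> x \<Longrightarrow> y = z"
  by (metis inv_closed m_assoc r_inv r_one)

lemma cm_swap: "a \<in> carrier G \<Longrightarrow> b \<in> carrier G \<Longrightarrow> a \<otimes> b = b \<otimes> a \<otimes> cm G a b"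
  by (simp add: cm_def m_assoc)

lemma cm_unique:
  assumes "a \<in> carrier G" "b \<in> carrier G" "z \<in> carrier G" "a \<otimes> b = b \<otimes> a \<otimes> z"
  shows "z = cm G a b"
proof -
  have "b \<otimes> a \<otimes> z = b \<otimes> a \<otimes> cm G a b" using assms(4)[symmetric] cm_swap[OF assms(1,2)] by (rule trans)
  then show ?thesis by (rule lcan[OF m_closed[OF assms(2,1)] assms(3) cm_closed[OF assms(1,2)]])
qed

lemma cm_mult_right:
  assumes a: "a \<in> carrier G" and b: "b \<in> carrier G" and c: "c \<in> carrier G"
  shows "cm G a (b \<otimes> c) = cm G a b \<otimes> cm G a c"
proof -
  have ab: "cm G a b \<in> Z" and ac: "cm G a c \<in> Z" using cmZ a b c by auto
  have abc: "cm G a b \<in> carrier G" and acc: "cm G a c \<in> carrier G" using a b c by auto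
  have "a \<otimes> (b \<otimes> c) = (a \<otimes> b) \<otimes> c" using a b c by (simp add: m_assoc)
  also have "\<dots> = (b \<otimes> a \<otimes> cm G a b) \<otimes> c" by (subst cm_swap[OF a b]) (rule refl)
  also have "\<dots> = b \<otimes> (a \<otimes> c) \<otimes> cm G a b" using a b c abc
    by (simp add: m_assoc Zcom[OF ab c])
  also have "\<dots> = b \<otimes> (c \<otimes> a \<otimes> cm G a c) \<otimes> cm G a b" by (subst cm_swap[OF a c]) (rule refl)
  also have "\<dots> = (b \<otimes> c) \<otimes> a \<otimes> (cm G a b \<otimes> cm G a c)"
    using a b c abc acc by (simp add: m_assoc Zcom[OF ab acc])
  finally have "a \<otimes> (b \<otimes> c) = (b \<otimes> c) \<otimes> a \<otimes> (cm G a b \<otimes> cm G a c)" .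
  then show ?thesis by (rule cm_unique[OF a m_closed[OF b c] m_closed[OF abc acc], symmetric])
qed

lemma cm_mult_left:
  assumes a: "a \<in> carrier G" and b: "b \<in> carrier G" and c: "c \<in> carrier G"
  shows "cm G (a \<otimes> b) c = cm G a c \<otimes> cm G b c"
proof -
  have bc: "cm G b c \<in> Z" and ac: "cm G a c \<in> Z" using cmZ a b c by auto
  have bcc: "cm G b c \<in> carrier G" and acc: "cm G a c \<in> carrier G" using a b c by auto
  have "a \<otimes> b \<otimes> c = a \<otimes> (b \<otimes> c)" using a b c by (simp add: m_assoc)
  also have "\<dots> = a \<otimes> (c \<otimes> b \<otimes> cm G b c)" by (subst cm_swap[OF b c]) (rule refl)
  also have "\<dots> = (a \<otimes> c) \<otimes> b \<otimes> cm G b c" using a b c bcc by (simp add: m_assoc)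
  also have "\<dots> = (c \<otimes> a \<otimes> cm G a c) \<otimes> b \<otimes> cm G b c" by (subst cm_swap[OF a c]) (rule refl)
  also have "\<dots> = c \<otimes> (a \<otimes> b) \<otimes> (cm G a c \<otimes> cm G b c)"
    using a b c bcc acc by (simp add: m_assoc Zcom[OF ac b])
  finally have "a \<otimes> b \<otimes> c = c \<otimes> (a \<otimes> b) \<otimes> (cm G a c \<otimes> cm G b c)" .
  then show ?thesis by (rule cm_unique[OF m_closed[OF a b] c m_closed[OF acc bcc], symmetric])
qed

lemma inv_from_prod: "c \<in> carrier G \<Longrightarrow> d \<in> carrier G \<Longrightarrow> c \<otimes> d = \<one> \<Longrightarrow> d = inv c"
proof -
  assume c: "c \<in> carrier G" and d: "d \<in> carrier G" and e: "c \<otimes> d = \<one>"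
  have "d = inv c \<otimes> (c \<otimes> d)" using c d by (simp add: m_assoc[symmetric])
  then show ?thesis using e c by simp
qed

lemma cm_one_right[simp]: "a \<in> carrier G \<Longrightarrow> cm G a \<one> = \<one>"
  by (simp add: cm_def)
lemma cm_one_left[simp]: "a \<in> carrier G \<Longrightarrow> cm G \<one> a = \<one>"
  by (simp add: cm_def)

lemma cm_inv_right:
  assumes a: "a \<in> carrier G" and b: "b \<in> carrier G"
  shows "cm G a (inv b) = inv (cm G a b)"
proof -
  have "cm G a b \<otimes> cm G a (inv b) = \<one>" using cm_mult_right[OF a b inv_closed[OF b]] a b by simp
  then show ?thesis by (rule inv_from_prod[OF cm_closed[OF a b] cm_closed[OF a inv_closed[OF b]]])
qed

lemma cm_inv_left:
  assumes a: "a \<in> carrier G" and b: "b \<in> carrier G"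
  shows "cm G (inv a) b = inv (cm G a b)"
proof -
  have "cm G a b \<otimes> cm G (inv a) b = \<one>" using cm_mult_left[OF a inv_closed[OF a] b] a b by simp
  then show ?thesis by (rule inv_from_prod[OF cm_closed[OF a b] cm_closed[OF inv_closed[OF a] b]])
qed

lemma cm_pow_right_nat:
  assumes a: "a \<in> carrier G" and b: "b \<in> carrier G"
  shows "cm G a (b [^] (n::nat)) = cm G a b [^] n"
proof (induction n)
  case (Suc n)
  then show ?case using a b by (simp add: cm_mult_right)
qed (simp add: a)

lemma cm_pow_left_nat:
  assumes a: "a \<in> carrier G" and b: "b \<in> carrier G"
  shows "cm G (a [^] (n::nat)) b = cm G a b [^] n"
proof (induction n)
  case (Suc n)
  then show ?case using a b by (simp add: cm_mult_left)
qed (simp add: b)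

lemma cm_pow_right:
  assumes a: "a \<in> carrier G" and b: "b \<in> carrier G"
  shows "cm G a (b [^] (n::int)) = cm G a b [^] n"
  using a b by (cases "n < 0") (simp_all add: int_pow_def2 cm_inv_right cm_pow_right_nat del: pow_nat)

lemma cm_pow_left:
  assumes a: "a \<in> carrier G" and b: "b \<in> carrier G"
  shows "cm G (a [^] (n::int)) b = cm G a b [^] n"
  using a b by (cases "n < 0") (simp_all add: int_pow_def2 cm_inv_left cm_pow_left_nat del: pow_nat)

lemma cm_antisym:
  assumes a: "a \<in> carrier G" and b: "b \<in> carrier G"
  shows "cm G b a = inv (cm G a b)"
proof -
  have z: "cm G a b \<in> Z" using cmZ a b by auto
  have "b \<otimes> a = a \<otimes> b \<otimes> inv (cm G a b)" using cm_swap[OF a b] a b z Zc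
    by (simp add: m_assoc)
  then show ?thesis by (rule cm_unique[OF b a inv_closed[OF cm_closed[OF a b]], symmetric])
qed

end

context xsp begin

lemma Zmove: "z \<in> Z \<Longrightarrow> x \<in> carrier G \<Longrightarrow> y \<in> carrier G \<Longrightarrow> x \<otimes> z \<otimes> y = x \<otimes> y \<otimes> z"
  using Zc Zcom[of z y] by (simp add: m_assoc)

lemma Zlcom: "z \<in> Z \<Longrightarrow> x \<in> carrier G \<Longrightarrow> y \<in> carrier G \<Longrightarrow> z \<otimes> (x \<otimes> y) = x \<otimes> (z \<otimes> y)"
  using Zc Zcom[of z x] by (simp add: m_assoc[symmetric])

lemma pow_mult_nat:
  fixes n :: nat
  assumes a: "a \<in> carrier G" and b: "b \<in> carrier G"
  shows "\<exists>m. 2 * m = n * (n - 1) \<and> (a \<otimes> b) [^] n = a [^] n \<otimes> b [^] n \<otimes> cm G b a [^] m"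
proof (induction n)
  case 0
  then show ?case using a b by (intro exI[of _ 0]) simp
next
  case (Suc n)
  then obtain m where m: "2 * m = n * (n - 1)" and IH: "(a \<otimes> b) [^] n = a [^] n \<otimes> b [^] n \<otimes> cm G b a [^] m" by blast
  define c where "c = cm G b a"
  have cZ: "c \<in> Z" unfolding c_def using cmZ[OF b a] .
  have cc: "c \<in> carrier G" using Zc[OF cZ] .
  have cmZ': "c [^] m \<in> Z" using Z_pow[OF cZ] .
  have cn: "c [^] n \<in> Z" using Z_pow[OF cZ] .
  have sw: "b [^] n \<otimes> a = a \<otimes> b [^] n \<otimes> c [^] n"
    using cm_swap[OF nat_pow_closed[OF b] a] cm_pow_left_nat[OF b a] unfolding c_def by simp
  have "(a \<otimes> b) [^] Suc n = (a [^] n \<otimes> b [^] n \<otimes> c [^] m) \<otimes> (a \<otimes> b)"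
    using IH unfolding c_def by simp
  also have "\<dots> = a [^] n \<otimes> b [^] n \<otimes> a \<otimes> c [^] m \<otimes> b"
    using a b cc Zlcom[OF cmZ' a b] by (simp add: m_assoc)
  also have "\<dots> = a [^] n \<otimes> (b [^] n \<otimes> a) \<otimes> c [^] m \<otimes> b"
    using a b cc by (simp add: m_assoc)
  also have "\<dots> = a [^] n \<otimes> (a \<otimes> b [^] n \<otimes> c [^] n) \<otimes> c [^] m \<otimes> b"
    using sw by simp
  also have "\<dots> = a [^] n \<otimes> a \<otimes> b [^] n \<otimes> (c [^] n \<otimes> c [^] m) \<otimes> b"
    using a b cc by (simp add: m_assoc)
  also have "\<dots> = a [^] n \<otimes> a \<otimes> b [^] n \<otimes> c [^] (n + m) \<otimes> b"
    using a b cc by (simp add: nat_pow_mult)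
  also have "\<dots> = a [^] n \<otimes> a \<otimes> b [^] n \<otimes> b \<otimes> c [^] (n + m)"
    using a b cc Zmove[OF Z_pow[OF cZ], of "a [^] n \<otimes> a \<otimes> b [^] n" b] by simp
  also have "\<dots> = a [^] Suc n \<otimes> b [^] Suc n \<otimes> c [^] (n + m)"
    using a b cc by (simp add: m_assoc)
  finally show ?case unfolding c_def using m
    by (intro exI[of _ "n + m"]) (cases n; simp add: algebra_simps)
qed


lemma p_dvd_half:
  assumes "2 * m = p * (p - 1)" shows "p dvd m"
proof -
  have "p dvd 2 * m" using assms by simp
  then have "p dvd 2 \<or> p dvd m" using prime_p by (simp add: prime_dvd_mult_iff)
  moreover have "\<not> p dvd 2"
  proof
    assume "p dvd 2"
    then have "p \<le> 2" by (simp add: dvd_imp_le)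
    moreover have "p \<ge> 2" using prime_p by (simp add: prime_ge_2_nat)
    ultimately have "p = 2" by simp
    then show False using odd_p by simp
  qed
  ultimately show ?thesis by blast
qed

lemma pow_p_mult:
  assumes a: "a \<in> carrier G" and b: "b \<in> carrier G"
  shows "(a \<otimes> b) [^] p = a [^] p \<otimes> b [^] p"
proof -
  obtain m where m: "2 * m = p * (p - 1)" and e: "(a \<otimes> b) [^] p = a [^] p \<otimes> b [^] p \<otimes> cm G b a [^] m"
    using pow_mult_nat[OF a b, of p] by blast
  obtain q where q: "m = p * q" using p_dvd_half[OF m] by (auto elim: dvdE)
  have "cm G b a [^] m = (cm G b a [^] p) [^] q" using q cm_closed[OF b a] by (simp add: nat_pow_pow)
  also have "\<dots> = \<one>" using Zp[OF cmZ[OF b a]] by simp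
  finally show ?thesis using e a b by simp
qed

lemma pow_int_mult_Z:
  assumes a: "a \<in> carrier G" and b: "b \<in> carrier G"
  shows "\<exists>c\<in>Z. (a \<otimes> b) [^] (n::int) = a [^] n \<otimes> b [^] n \<otimes> c"
proof (cases "n \<ge> 0")
  case True
  then obtain k :: nat where k: "n = int k" by (metis nonneg_eq_int)
  obtain m :: nat where "(a \<otimes> b) [^] k = a [^] k \<otimes> b [^] k \<otimes> cm G b a [^] m"
    using pow_mult_nat[OF a b, of k] by auto
  then show ?thesis using k Z_pow[OF cmZ[OF b a]] by (auto simp: int_pow_int)
next
  case False
  then obtain k :: nat where k: "n = - int k" by (metis nonneg_eq_int neg_0_le_iff_le nle_le minus_minus)
  obtain m :: nat where e: "(a \<otimes> b) [^] k = a [^] k \<otimes> b [^] k \<otimes> cm G b a [^] m"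
    using pow_mult_nat[OF a b, of k] by auto
  define z where "z = cm G b a [^] m"
  have zZ: "z \<in> Z" unfolding z_def using Z_pow[OF cmZ[OF b a]] .
  have zc: "z \<in> carrier G" using Zc[OF zZ] .
  define A where "A = inv (a [^] k)"
  define B where "B = inv (b [^] k)"
  have Ac: "A \<in> carrier G" and Bc: "B \<in> carrier G" unfolding A_def B_def using a b by auto
  have w: "cm G B A \<in> Z" using cmZ[OF Bc Ac] .
  have "(a \<otimes> b) [^] n = inv ((a \<otimes> b) [^] k)" using k a b by (simp add: int_pow_neg_int)
  also have "\<dots> = inv (a [^] k \<otimes> b [^] k \<otimes> z)" using e z_def by simp
  also have "\<dots> = inv z \<otimes> (B \<otimes> A)" unfolding A_def B_def using a b zc by (simp add: inv_mult_group m_assoc)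
  also have "\<dots> = inv z \<otimes> (A \<otimes> B \<otimes> cm G B A)" using cm_swap[OF Bc Ac] by simp
  also have "\<dots> = A \<otimes> B \<otimes> (cm G B A \<otimes> inv z)"
    using Ac Bc zc Zcom[OF Z_inv[OF zZ], of "A \<otimes> B \<otimes> cm G B A"] by (simp add: m_assoc)
  finally show ?thesis unfolding A_def B_def using k a b Z_mult[OF w Z_inv[OF zZ]]
    by (auto simp: int_pow_neg_int A_def B_def)
qed

lemma pow_p_int:
  assumes a: "a \<in> carrier G" and b: "b \<in> carrier G" and d: "int p dvd e"
  shows "(a \<otimes> b) [^] e = a [^] e \<otimes> b [^] e"
proof -
  obtain q where q: "e = int p * q" using d by (auto elim: dvdE)
  have pw: "x [^] e = (x [^] p) [^] q" if "x \<in> carrier G" for x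
    using that q by (simp add: int_pow_pow int_pow_int[symmetric])
  have ap: "a [^] p \<in> Z" and bp: "b [^] p \<in> Z" using powZ a b by auto
  have "(a \<otimes> b) [^] e = (a [^] p \<otimes> b [^] p) [^] q" using pw a b pow_p_mult[OF a b] by simp
  also have "\<dots> = (a [^] p) [^] q \<otimes> (b [^] p) [^] q"
    by (rule int_pow_mult_distrib[OF Zcom[OF ap nat_pow_closed[OF b]] Zc[OF ap] Zc[OF bp]])
  finally show ?thesis using pw a b by simp
qed

lemma pow_p_Z:
  assumes a: "a \<in> carrier G" and d: "int p dvd e"
  shows "a [^] e \<in> Z"
proof -
  obtain q where q: "e = int p * q" using d by (auto elim: dvdE)
  have "a [^] e = (a [^] p) [^] q" using a q by (simp add: int_pow_pow int_pow_int[symmetric])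
  then show ?thesis using Z_ipow[OF powZ[OF a]] by simp
qed

lemma pow_central_int:
  assumes a: "a \<in> carrier G" and z: "z \<in> Z"
  shows "(a \<otimes> z) [^] (e::int) = a [^] e \<otimes> z [^] e"
  by (rule int_pow_mult_distrib[OF Zcom[OF z a, symmetric] a Zc[OF z]])

end

fun expo :: "nat \<Rightarrow> (nat \<times> bool) list \<Rightarrow> int" where
  "expo i [] = 0"
| "expo i ((j, e) # w) = (if j = i then (if e then 1 else -1) else 0) + expo i w"

fun Bf :: "('a, 'b) monoid_scheme \<Rightarrow> nat \<Rightarrow> (nat \<times> bool) list \<Rightarrow> (nat \<Rightarrow> 'a) \<Rightarrow> 'a" where
  "Bf G i [] t = \<one>\<^bsub>G\<^esub>"
| "Bf G i ((j, e) # w) t = (if j = i then Bf G i w t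
     else ((if e then t j else inv\<^bsub>G\<^esub> (t j)) [^]\<^bsub>G\<^esub> (- expo i w)) \<otimes>\<^bsub>G\<^esub> Bf G i w t)"

fun cf :: "nat \<Rightarrow> nat \<Rightarrow> (nat \<times> bool) list \<Rightarrow> int" where
  "cf i j [] = 0"
| "cf i j ((l, e) # w) = (if l = i then 0 else if l = j then (if e then - expo i w else expo i w) else 0) + cf i j w"

context xsp begin

lemma word_eval_closed:
  "(\<forall>l\<in>set w. t (fst l) \<in> carrier G) \<Longrightarrow> word_eval G w t \<in> carrier G"
proof (induction w)
  case (Cons a w)
  then show ?case by (cases a) auto
qed simp

lemma Bf_closed:
  "(\<forall>l\<in>set w. fst l \<noteq> i \<longrightarrow> t (fst l) \<in> carrier G) \<Longrightarrow> Bf G i w t \<in> carrier G"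
proof (induction w)
  case (Cons a w)
  then show ?case by (cases a) auto
qed simp

lemma word_decomp:
  assumes "\<forall>l\<in>set w. fst l \<noteq> i \<longrightarrow> t (fst l) \<in> carrier G" and x: "x \<in> carrier G"
  shows "word_eval G w (t(i:=x)) = x [^] expo i w \<otimes> word_eval G w (t(i:=\<one>)) \<otimes> cm G x (Bf G i w t)"
  using assms(1)
proof (induction w)
  case Nil
  then show ?case using x by simp
next
  case (Cons l w)
  obtain j e where l: "l = (j, e)" by (cases l)
  have tw: "\<forall>l\<in>set w. fst l \<noteq> i \<longrightarrow> t (fst l) \<in> carrier G" using Cons.prems by auto
  note IH = Cons.IH[OF tw]
  define E where "E = expo i w"
  define A where "A = word_eval G w (t(i:=\<one>))"
  define B where "B = Bf G i w t"
  have Ac: "A \<in> carrier G" unfolding A_def by (rule word_eval_closed) (use tw in auto)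
  have Bc: "B \<in> carrier G" unfolding B_def by (rule Bf_closed[OF tw])
  have xE: "x [^] E \<in> carrier G" using x by simp
  show ?case
  proof (cases "j = i")
    case True
    show ?thesis
    proof (cases e)
      case True
      have "word_eval G (l # w) (t(i:=x)) = x \<otimes> word_eval G w (t(i:=x))"
        using l \<open>j = i\<close> True by simp
      also have "\<dots> = x \<otimes> (x [^] E \<otimes> A \<otimes> cm G x B)"
        unfolding E_def A_def B_def by (rule arg_cong[where f="\<lambda>z. x \<otimes> z", OF IH])
      also have "\<dots> = x [^] (1 + E) \<otimes> A \<otimes> cm G x B"
        using x Ac Bc by (simp add: int_pow_mult m_assoc)
      moreover have "word_eval G (l # w) (t(i:=\<one>)) = \<one> \<otimes> A"
        unfolding A_def l \<open>j = i\<close> using True by (simp only: word_eval.simps fun_upd_same if_True)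
      moreover have "expo i (l # w) = 1 + E" unfolding E_def l \<open>j = i\<close> using True by simp
      moreover have "Bf G i (l # w) t = B" unfolding B_def l \<open>j = i\<close> by simp
      ultimately show ?thesis using Ac by (simp only: l_one)
    next
      case False
      have "word_eval G (l # w) (t(i:=x)) = inv x \<otimes> word_eval G w (t(i:=x))"
        using l \<open>j = i\<close> False by simp
      also have "\<dots> = inv x \<otimes> (x [^] E \<otimes> A \<otimes> cm G x B)"
        unfolding E_def A_def B_def by (rule arg_cong[where f="\<lambda>z. inv x \<otimes> z", OF IH])
      also have "\<dots> = x [^] (- 1 + E) \<otimes> A \<otimes> cm G x B"
      proof -
        have p1: "x [^] (-1 + E) = x [^] (-1::int) \<otimes> x [^] E" by (rule int_pow_mult[OF x])
        have p2: "x [^] (-1::int) = inv x" using int_pow_neg[OF x, of 1] x by simp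
        show ?thesis unfolding p1 p2 using x Ac Bc by (simp add: m_assoc)
      qed
      moreover have "word_eval G (l # w) (t(i:=\<one>)) = inv \<one> \<otimes> A"
        unfolding A_def l \<open>j = i\<close> using False by (simp only: word_eval.simps fun_upd_same if_False)
      moreover have "expo i (l # w) = - 1 + E" unfolding E_def l \<open>j = i\<close> using False by simp
      moreover have "Bf G i (l # w) t = B" unfolding B_def l \<open>j = i\<close> by simp
      ultimately show ?thesis using Ac by (simp only: inv_one l_one)
    qed
  next
    case False
    define y where "y = (if e then t j else inv (t j))"
    have tj: "t j \<in> carrier G" using Cons.prems l False by auto
    have yc: "y \<in> carrier G" unfolding y_def using tj by auto
    have ev1: "word_eval G (l # w) (t(i:=x)) = y \<otimes> word_eval G w (t(i:=x))"
      unfolding l y_def using False by (simp only: word_eval.simps fun_upd_other not_False_eq_True)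
    have ev2: "word_eval G (l # w) (t(i:=\<one>)) = y \<otimes> A"
      unfolding l y_def A_def using False by (simp only: word_eval.simps fun_upd_other not_False_eq_True)
    have bf: "Bf G i (l # w) t = y [^] (- E) \<otimes> B"
      using l False unfolding y_def E_def B_def by simp
    have ex: "expo i (l # w) = E" using l False unfolding E_def by simp
    define c where "c = cm G x y"
    have cZ: "c \<in> Z" unfolding c_def using cmZ[OF x yc] .
    have cc: "c \<in> carrier G" using Zc[OF cZ] .
    have wZ: "c [^] (- E) \<in> Z" using Z_ipow[OF cZ] .
    have wc: "c [^] (- E) \<in> carrier G" using Zc[OF wZ] .
    have s1: "y \<otimes> x [^] E = x [^] E \<otimes> y \<otimes> c [^] (- E)"
    proof -
      have "cm G y (x [^] E) = cm G y x [^] E" using cm_pow_right[OF yc x] .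
      also have "\<dots> = inv c [^] E" unfolding c_def using cm_antisym[OF x yc] by simp
      also have "\<dots> = c [^] (- E)" using cc by (simp add: int_pow_inv int_pow_neg)
      finally show ?thesis using cm_swap[OF yc xE] by simp
    qed
    have s2: "cm G x (y [^] (- E) \<otimes> B) = c [^] (- E) \<otimes> cm G x B"
      using cm_mult_right[OF x int_pow_closed[OF yc] Bc] cm_pow_right[OF x yc] unfolding c_def by simp
    have "word_eval G (l # w) (t(i:=x)) = y \<otimes> (x [^] E \<otimes> A \<otimes> cm G x B)"
      unfolding ev1 E_def A_def B_def by (rule arg_cong[where f="\<lambda>z. y \<otimes> z", OF IH])
    also have "\<dots> = (y \<otimes> x [^] E) \<otimes> A \<otimes> cm G x B" using x yc xE Ac Bc by (simp add: m_assoc)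
    also have "\<dots> = x [^] E \<otimes> y \<otimes> c [^] (- E) \<otimes> A \<otimes> cm G x B" using s1 by simp
    also have "\<dots> = x [^] E \<otimes> y \<otimes> A \<otimes> c [^] (- E) \<otimes> cm G x B"
      using Zmove[OF wZ, of "x [^] E \<otimes> y" A] xE yc Ac by simp
    also have "\<dots> = x [^] E \<otimes> (y \<otimes> A) \<otimes> (c [^] (- E) \<otimes> cm G x B)"
      using xE yc Ac wc Bc x by (simp add: m_assoc)
    finally show ?thesis by (simp only: ev2 bf ex s2)
  qed
qed

end

context xsp begin

lemma Bmod:
  assumes "\<forall>l\<in>set w. fst l \<noteq> i \<longrightarrow> t (fst l) \<in> carrier G" and y: "y \<in> carrier G" and ji: "j \<noteq> i"
  shows "\<exists>z\<in>Z. Bf G i w (t(j:=y)) = y [^] cf i j w \<otimes> Bf G i w (t(j:=\<one>)) \<otimes> z"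
  using assms(1)
proof (induction w)
  case Nil
  then show ?case using y Z_one by (intro bexI[of _ \<one>]) auto
next
  case (Cons l w)
  obtain m e where l: "l = (m, e)" by (cases l)
  have tw: "\<forall>l\<in>set w. fst l \<noteq> i \<longrightarrow> t (fst l) \<in> carrier G" using Cons.prems by auto
  obtain z where zZ: "z \<in> Z" and IH: "Bf G i w (t(j:=y)) = y [^] cf i j w \<otimes> Bf G i w (t(j:=\<one>)) \<otimes> z"
    using Cons.IH[OF tw] by blast
  have zc: "z \<in> carrier G" using Zc[OF zZ] .
  define E where "E = expo i w"
  define c where "c = cf i j w"
  define B1 where "B1 = Bf G i w (t(j:=\<one>))"
  have B1c: "B1 \<in> carrier G" unfolding B1_def by (rule Bf_closed) (use tw y in auto)
  have yc: "y [^] c \<in> carrier G" using y by simp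
  show ?case
  proof (cases "m = i")
    case True
    have "Bf G i (l # w) (t(j:=y)) = Bf G i w (t(j:=y))" using l True by simp
    moreover have "Bf G i (l # w) (t(j:=\<one>)) = Bf G i w (t(j:=\<one>))" using l True by simp
    moreover have "cf i j (l # w) = cf i j w" using l True by simp
    ultimately have "Bf G i (l # w) (t(j:=y)) = y [^] cf i j (l # w) \<otimes> Bf G i (l # w) (t(j:=\<one>)) \<otimes> z"
      using IH by (simp only:)
    then show ?thesis using zZ by blast
  next
    case mi: False
    show ?thesis
    proof (cases "m = j")
      case True
      define d where "d = (if e then - E else E)"
      have v: "(if e then y else inv y) [^] (- E) = y [^] d"
        unfolding d_def using y by (simp add: int_pow_inv int_pow_neg)
      have "Bf G i (l # w) (t(j:=y)) = (if e then y else inv y) [^] (- E) \<otimes> Bf G i w (t(j:=y))"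
        using l True mi unfolding E_def by simp
      also have "\<dots> = y [^] d \<otimes> (y [^] c \<otimes> B1 \<otimes> z)" unfolding v IH c_def B1_def ..
      also have "\<dots> = y [^] (d + c) \<otimes> B1 \<otimes> z" using y B1c zc by (simp add: int_pow_mult m_assoc)
      finally have 1: "Bf G i (l # w) (t(j:=y)) = y [^] (d + c) \<otimes> B1 \<otimes> z" .
      have 2: "Bf G i (l # w) (t(j:=\<one>)) = B1" using l True mi B1c unfolding B1_def by simp
      have 3: "cf i j (l # w) = d + c" using l True mi unfolding d_def c_def E_def by simp
      show ?thesis unfolding 1 2 3 using zZ by blast
    next
      case mj: False
      define u where "u = (if e then t m else inv (t m)) [^] (- E)"
      have tm: "t m \<in> carrier G" using Cons.prems l mi by auto
      have uc: "u \<in> carrier G" unfolding u_def using tm by auto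
      have w: "cm G u (y [^] c) \<in> Z" using cmZ[OF uc yc] .
      have "Bf G i (l # w) (t(j:=y)) = u \<otimes> Bf G i w (t(j:=y))"
        using l mj mi tm unfolding u_def E_def by simp
      also have "\<dots> = u \<otimes> (y [^] c \<otimes> B1 \<otimes> z)" unfolding IH c_def B1_def ..
      also have "\<dots> = (u \<otimes> y [^] c) \<otimes> B1 \<otimes> z" using uc yc B1c zc by (simp add: m_assoc)
      also have "\<dots> = y [^] c \<otimes> u \<otimes> cm G u (y [^] c) \<otimes> B1 \<otimes> z" using cm_swap[OF uc yc] by simp
      also have "\<dots> = y [^] c \<otimes> (u \<otimes> B1) \<otimes> (cm G u (y [^] c) \<otimes> z)"
        using Zmove[OF w, of "y [^] c \<otimes> u" B1] uc yc B1c zc Zc[OF w] by (simp add: m_assoc)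
      finally have 1: "Bf G i (l # w) (t(j:=y)) = y [^] c \<otimes> (u \<otimes> B1) \<otimes> (cm G u (y [^] c) \<otimes> z)" .
      have 2: "Bf G i (l # w) (t(j:=\<one>)) = u \<otimes> B1" using l mj mi unfolding u_def B1_def E_def by simp
      have 3: "cf i j (l # w) = c" using l mj mi unfolding c_def by simp
      show ?thesis unfolding 1 2 3 using Z_mult[OF w zZ] by blast
    qed
  qed
qed

lemma cm_eq_center:
  assumes a: "a \<in> carrier G" and b: "b \<in> carrier G" and h: "\<And>x. x \<in> carrier G \<Longrightarrow> cm G x a = cm G x b"
  shows "a \<otimes> inv b \<in> Z"
proof (rule center_memI)
  show "a \<otimes> inv b \<in> carrier G" using a b by simp
  fix x assume x: "x \<in> carrier G"
  have "cm G x (a \<otimes> inv b) = cm G x a \<otimes> inv (cm G x b)" using cm_mult_right[OF x a inv_closed[OF b]] cm_inv_right[OF x b] by simp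
  also have "\<dots> = \<one>" using h[OF x] x b by simp
  finally have "cm G x (a \<otimes> inv b) = \<one>" .
  then have "x \<otimes> (a \<otimes> inv b) = (a \<otimes> inv b) \<otimes> x" using cm_swap[OF x, of "a \<otimes> inv b"] a b x by simp
  then show "(a \<otimes> inv b) \<otimes> x = x \<otimes> (a \<otimes> inv b)" by simp
qed

lemma coprime_Z:
  assumes u: "u \<in> carrier G" and nd: "\<not> int p dvd e" and ue: "u [^] e \<in> Z"
  shows "u \<in> Z"
proof -
  have "coprime (int p) e" using nd prime_p
    by (metis prime_int_iff prime_nat_int_transfer coprime_commute prime_imp_coprime)
  then obtain a b where ab: "a * int p + b * e = 1"
    by (metis bezout_int coprime_iff_gcd_eq_1)
  have "u = u [^] (a * int p + b * e)" using ab u by simp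
  also have "\<dots> = (u [^] p) [^] a \<otimes> (u [^] e) [^] b"
    using u by (simp add: int_pow_mult int_pow_pow int_pow_int[symmetric] mult.commute)
  finally have "u = (u [^] p) [^] a \<otimes> (u [^] e) [^] b" .
  then show ?thesis using Z_mult[OF Z_ipow[OF powZ[OF u], of a] Z_ipow[OF ue, of b]] by simp
qed

lemma coprime_one:
  assumes u: "u \<in> Z" and nd: "\<not> int p dvd e" and ue: "u [^] e = \<one>"
  shows "u = \<one>"
proof -
  have uc: "u \<in> carrier G" using Zc[OF u] .
  have "coprime (int p) e" using nd prime_p
    by (metis prime_int_iff prime_nat_int_transfer coprime_commute prime_imp_coprime)
  then obtain a b where ab: "a * int p + b * e = 1"
    by (metis bezout_int coprime_iff_gcd_eq_1)
  have "u = u [^] (a * int p + b * e)" using ab uc by simp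
  also have "\<dots> = (u [^] p) [^] a \<otimes> (u [^] e) [^] b"
    using uc by (simp add: int_pow_mult int_pow_pow int_pow_int[symmetric] mult.commute)
  finally show ?thesis using Zp[OF u] ue by simp
qed

end

lemma sum_slice:
  fixes f :: "(nat \<Rightarrow> 'a) \<Rightarrow> nat"
  assumes i: "i \<in> I" and c: "c \<in> B i"
  shows "(\<Sum>t\<in>PiE I B. f t) = (\<Sum>t\<in>PiE I (B(i:={c})). \<Sum>x\<in>B i. f (t(i:=x)))"
proof -
  let ?h = "\<lambda>(t, x). t(i:=x)"
  have bij: "bij_betw ?h (PiE I (B(i:={c})) \<times> B i) (PiE I B)"
  proof (rule bij_betw_imageI)
    show "inj_on ?h (PiE I (B(i:={c})) \<times> B i)"
    proof (rule inj_onI, clarify)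
      fix t x t' x'
      assume t: "t \<in> PiE I (B(i:={c}))" and t': "t' \<in> PiE I (B(i:={c}))"
        and eq: "t(i:=x) = t'(i:=x')"
      have "x = x'" using fun_cong[OF eq, of i] by simp
      moreover have "t = t'"
      proof
        fix j show "t j = t' j"
        proof (cases "j = i")
          case True
          then show ?thesis using PiE_mem[OF t i] PiE_mem[OF t' i] by simp
        next
          case False
          then show ?thesis using fun_cong[OF eq, of j] by simp
        qed
      qed
      ultimately show "t = t' \<and> x = x'" by simp
    qed
    show "?h ` (PiE I (B(i:={c})) \<times> B i) = PiE I B"
    proof
      show "?h ` (PiE I (B(i:={c})) \<times> B i) \<subseteq> PiE I B"
        using i by (auto simp: PiE_iff extensional_def split: if_splits)
      show "PiE I B \<subseteq> ?h ` (PiE I (B(i:={c})) \<times> B i)"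
      proof
        fix s assume s: "s \<in> PiE I B"
        have "s = ?h (s(i:=c), s i)" by simp
        moreover have "(s(i:=c), s i) \<in> PiE I (B(i:={c})) \<times> B i"
          using s i c by (auto simp: PiE_iff extensional_def)
        ultimately show "s \<in> ?h ` (PiE I (B(i:={c})) \<times> B i)" by (rule image_eqI)
      qed
    qed
  qed
  have "(\<Sum>t\<in>PiE I (B(i:={c})). \<Sum>x\<in>B i. f (t(i:=x))) = (\<Sum>p\<in>PiE I (B(i:={c})) \<times> B i. f (?h p))"
    by (simp add: sum.cartesian_product case_prod_beta)
  also have "\<dots> = (\<Sum>t\<in>PiE I B. f t)" by (rule sum.reindex_bij_betw[OF bij])
  finally show ?thesis by simp
qed

lemma card_PiE_fix:
  assumes "i < k" "finite A"
  shows "card (PiE {..<k} ((\<lambda>_. A)(i:={c}))) = card A ^ (k - 1)"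
proof -
  have "card (PiE {..<k} ((\<lambda>_. A)(i:={c}))) = (\<Prod>j\<in>{..<k}. card (((\<lambda>_. A)(i:={c})) j))"
    by (simp add: card_PiE)
  also have "\<dots> = card (((\<lambda>_. A)(i:={c})) i) * (\<Prod>j\<in>{..<k} - {i}. card (((\<lambda>_. A)(i:={c})) j))"
    using assms by (simp add: prod.remove)
  also have "\<dots> = card A ^ (k - 1)" using assms by simp
  finally show ?thesis .
qed

lemma card_PiE_fix2:
  assumes "i < k" "j < k" "i \<noteq> j" "finite A"
  shows "card (PiE {..<k} ((\<lambda>_. A)(i:={c}, j:={d}))) = card A ^ (k - 2)"
proof -
  have "card (PiE {..<k} ((\<lambda>_. A)(i:={c}, j:={d}))) = (\<Prod>l\<in>{..<k}. card (((\<lambda>_. A)(i:={c}, j:={d})) l))"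
    by (simp add: card_PiE)
  also have "\<dots> = card (((\<lambda>_. A)(i:={c}, j:={d})) i) * (\<Prod>l\<in>{..<k} - {i}. card (((\<lambda>_. A)(i:={c}, j:={d})) l))"
    using assms by (simp add: prod.remove)
  also have "\<dots> = (\<Prod>l\<in>{..<k} - {i}. card (((\<lambda>_. A)(i:={c}, j:={d})) l))" using assms by simp
  also have "\<dots> = card (((\<lambda>_. A)(i:={c}, j:={d})) j) * (\<Prod>l\<in>{..<k} - {i} - {j}. card (((\<lambda>_. A)(i:={c}, j:={d})) l))"
    using assms by (subst prod.remove[of _ j]) auto
  also have "\<dots> = (\<Prod>l\<in>{..<k} - {i} - {j}. card A)" using assms by simp
  also have "\<dots> = card A ^ (k - 2)" using assms by (simp add: card_Diff_singleton numeral_2_eq_2)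
  finally show ?thesis .
qed

lemma coord_induct:
  assumes base: "R (\<lambda>j. if j < k then one G else undefined)"
    and step: "\<And>t i x. t \<in> tuples G k \<Longrightarrow> i < k \<Longrightarrow> x \<in> carrier G \<Longrightarrow> R (t(i:=one G)) \<Longrightarrow> R (t(i:=x))"
    and oc: "one G \<in> carrier G"
    and t: "t \<in> tuples G k"
  shows "R t"
proof -
  have "\<forall>t\<in>tuples G k. (\<forall>j. m \<le> j \<and> j < k \<longrightarrow> t j = one G) \<longrightarrow> R t" for m
  proof (induction m)
    case 0
    show ?case
    proof (intro ballI impI)
      fix t assume t: "t \<in> tuples G k" and h: "\<forall>j. 0 \<le> j \<and> j < k \<longrightarrow> t j = one G"
      have "t = (\<lambda>j. if j < k then one G else undefined)"
      proof
        fix j show "t j = (if j < k then one G else undefined)"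
          using t h by (auto simp: tuples_def PiE_iff extensional_def)
      qed
      then show "R t" using base by simp
    qed
  next
    case (Suc m)
    show ?case
    proof (intro ballI impI)
      fix t assume t: "t \<in> tuples G k" and h: "\<forall>j. Suc m \<le> j \<and> j < k \<longrightarrow> t j = one G"
      show "R t"
      proof (cases "m < k")
        case True
        have t1: "t(m := one G) \<in> tuples G k" using t True oc by (auto simp: tuples_def PiE_iff extensional_def)
        have "R (t(m := one G))" using Suc.IH t1 h by auto
        then have "R (t(m := t m))" using step[OF t True, of "t m"] t True by (auto simp: tuples_def PiE_iff)
        then show ?thesis by simp
      next
        case False
        then show ?thesis using Suc.IH t h by auto
      qed
    qed
  qed
  note H = this
  show ?thesis using H[of k] t by auto
qed


lemma Bf_upd_i: "Bf G i w (t(i:=x)) = Bf G i w t"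
  by (induction w) auto

context xsp begin

lemma word_eval_ones:
  "(\<forall>l\<in>set w. t (fst l) = \<one>) \<Longrightarrow> word_eval G w t = \<one>"
proof (induction w)
  case (Cons l w)
  obtain j e where l: "l = (j, e)" by (cases l)
  have "t j = \<one>" using Cons.prems l by simp
  moreover have "word_eval G w t = \<one>" using Cons by simp
  ultimately show ?case using l by (cases e) simp_all
qed simp

lemma finZ: "finite Z" using fin center_sub by (rule finite_subset[rotated])

lemma fib:
  assumes hc: "\<And>x. x \<in> carrier G \<Longrightarrow> h x \<in> Z"
    and hm: "\<And>x y. x \<in> carrier G \<Longrightarrow> y \<in> carrier G \<Longrightarrow> h (x \<otimes> y) = h x \<otimes> h y"
    and x1: "x1 \<in> carrier G" "h x1 \<noteq> \<one>" and z: "z \<in> Z"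
  shows "p * card {x\<in>carrier G. h x = z} = card (carrier G)"
proof -
  have h1: "h \<one> = \<one>"
  proof -
    have "h \<one> = h \<one> \<otimes> h \<one>" using hm[of \<one> \<one>] by simp
    then show ?thesis using Zc[OF hc[of \<one>]] by (metis l_one one_closed rcan)
  qed
  define K where "K = {x\<in>carrier G. h x = \<one>}"
  have hpow: "h (x1 [^] n) = h x1 [^] n" for n :: nat
  proof (induction n)
    case 0 then show ?case using h1 by simp
  next
    case (Suc n) then show ?case using hm[of "x1 [^] n" x1] x1 by simp
  qed
  have z1Z: "h x1 \<in> Z" using hc[OF x1(1)] .
  have z1c: "h x1 \<in> carrier G" using Zc[OF z1Z] .
  have ordp: "ord (h x1) = p"
  proof -
    have "ord (h x1) dvd p" using Zp[OF z1Z] z1c by (simp add: pow_eq_id)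
    moreover have "ord (h x1) \<noteq> 1" using x1(2) by (simp only: ord_eq_1[OF z1c] not_False_eq_True)
    ultimately show ?thesis using prime_p by (metis prime_nat_iff)
  qed
  have gen: "generate G {h x1} = Z"
  proof (rule card_subset_eq)
    show "finite Z" by (rule finZ)
    show "generate G {h x1} \<subseteq> Z" using generate_subgroup_incl[OF _ Zsub] z1Z by blast
    show "card (generate G {h x1}) = card Z" using generate_pow_card[OF z1c] ordp cardZ by simp
  qed
  have surj: "\<exists>x\<in>carrier G. h x = z'" if "z' \<in> Z" for z'
  proof -
    have "z' \<in> generate G {h x1}" using gen that by simp
    then obtain n :: nat where "z' = h x1 [^] n" using generate_pow_on_finite_carrier[OF fin z1c] by auto
    then show ?thesis using hpow[of n] x1 by (intro bexI[of _ "x1 [^] n"]) auto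
  qed
  have fibK: "card {x\<in>carrier G. h x = z'} = card K" if zZ': "z' \<in> Z" for z'
  proof -
    obtain x0 where x0: "x0 \<in> carrier G" "h x0 = z'" using surj[OF zZ'] by blast
    have "{x\<in>carrier G. h x = z'} = (\<lambda>y. x0 \<otimes> y) ` K"
    proof
      show "(\<lambda>y. x0 \<otimes> y) ` K \<subseteq> {x\<in>carrier G. h x = z'}"
        using x0 hm Zc[OF zZ'] unfolding K_def by auto
      show "{x\<in>carrier G. h x = z'} \<subseteq> (\<lambda>y. x0 \<otimes> y) ` K"
      proof
        fix x assume x: "x \<in> {x\<in>carrier G. h x = z'}"
        then have xc: "x \<in> carrier G" and hx: "h x = z'" by auto
        have "h x0 \<otimes> h (inv x0 \<otimes> x) = h x" using hm[of x0 "inv x0 \<otimes> x"] x0 xc by simp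
        then have "z' \<otimes> h (inv x0 \<otimes> x) = z' \<otimes> \<one>" using hx x0 Zc[OF zZ'] by simp
        then have "h (inv x0 \<otimes> x) = \<one>" using Zc[OF zZ'] Zc[OF hc[of "inv x0 \<otimes> x"]] x0 xc
          by (metis inv_closed lcan m_closed one_closed)
        then have "inv x0 \<otimes> x \<in> K" unfolding K_def using x0 xc by simp
        moreover have "x = x0 \<otimes> (inv x0 \<otimes> x)" using x0 xc by simp
        ultimately show "x \<in> (\<lambda>y. x0 \<otimes> y) ` K" by blast
      qed
    qed
    moreover have "inj_on (\<lambda>y. x0 \<otimes> y) K" using x0 unfolding K_def by (auto intro!: inj_onI)
    ultimately show ?thesis by (simp add: card_image)
  qed
  have "card (carrier G) = card (\<Union>z'\<in>Z. {x\<in>carrier G. h x = z'})"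
  proof -
    have "carrier G = (\<Union>z'\<in>Z. {x\<in>carrier G. h x = z'})" using hc by auto
    then show ?thesis by simp
  qed
  also have "\<dots> = (\<Sum>z'\<in>Z. card {x\<in>carrier G. h x = z'})"
  proof (rule card_UN_disjoint)
    show "finite Z" by (rule finZ)
    show "\<forall>i\<in>Z. finite {x \<in> carrier G. h x = i}" using fin by simp
    show "\<forall>i\<in>Z. \<forall>j\<in>Z. i \<noteq> j \<longrightarrow> {x \<in> carrier G. h x = i} \<inter> {x \<in> carrier G. h x = j} = {}" by blast
  qed
  also have "\<dots> = (\<Sum>z'\<in>Z. card K)" using fibK by simp
  also have "\<dots> = p * card K" using cardZ by simp
  finally show ?thesis using fibK[OF z] by simp
qed

end

context xsp begin

lemma cm_central_left: "z \<in> Z \<Longrightarrow> b \<in> carrier G \<Longrightarrow> cm G z b = \<one>"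
proof -
  assume z: "z \<in> Z" and b: "b \<in> carrier G"
  have "z \<otimes> b = b \<otimes> z \<otimes> \<one>" using Zcom[OF z b] b Zc[OF z] by simp
  then show ?thesis by (rule cm_unique[OF Zc[OF z] b one_closed, symmetric])
qed

lemma cm_central_right: "z \<in> Z \<Longrightarrow> b \<in> carrier G \<Longrightarrow> cm G b z = \<one>"
  using cm_antisym[of z b] cm_central_left[of z b] Zc[of z] by simp

lemma aff_inj:
  assumes nd: "\<not> int p dvd E" and A: "A \<in> carrier G" and B: "B \<in> carrier G"
  shows "inj_on (\<lambda>x. x [^] E \<otimes> A \<otimes> cm G x B) (carrier G)"
proof (rule inj_onI)
  fix x y assume x: "x \<in> carrier G" and y: "y \<in> carrier G"
    and eq: "x [^] E \<otimes> A \<otimes> cm G x B = y [^] E \<otimes> A \<otimes> cm G y B"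
  define u where "u = inv x \<otimes> y"
  have uc: "u \<in> carrier G" unfolding u_def using x y by simp
  have yu: "y = x \<otimes> u" unfolding u_def using x y by (simp add: m_assoc[symmetric])
  define D where "D = A \<otimes> cm G x B"
  have Dc: "D \<in> carrier G" unfolding D_def using A B x by simp
  have xE: "x [^] E \<in> carrier G" and uE: "u [^] E \<in> carrier G" using x uc by auto
  have fx: "x [^] E \<otimes> A \<otimes> cm G x B = x [^] E \<otimes> D" unfolding D_def using x A B by (simp add: m_assoc)
  obtain c where cZ: "c \<in> Z" and pc: "(x \<otimes> u) [^] E = x [^] E \<otimes> u [^] E \<otimes> c"
    using pow_int_mult_Z[OF x uc] by blast
  have cuZ: "cm G u B \<in> Z" using cmZ[OF uc B] .
  define z' where "z' = c \<otimes> cm G u B"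
  have z'Z: "z' \<in> Z" unfolding z'_def using Z_mult[OF cZ cuZ] .
  have z'c: "z' \<in> carrier G" using Zc[OF z'Z] .
  have cc: "c \<in> carrier G" using Zc[OF cZ] .
  have fy: "y [^] E \<otimes> A \<otimes> cm G y B = x [^] E \<otimes> (u [^] E \<otimes> z' \<otimes> D)"
  proof -
    have "y [^] E \<otimes> A \<otimes> cm G y B = (x [^] E \<otimes> u [^] E \<otimes> c) \<otimes> A \<otimes> (cm G x B \<otimes> cm G u B)"
      unfolding yu pc cm_mult_left[OF x uc B] ..
    also have "\<dots> = x [^] E \<otimes> u [^] E \<otimes> (c \<otimes> (A \<otimes> cm G x B) \<otimes> cm G u B)"
      using xE uE cc A B x uc by (simp add: m_assoc)
    also have "\<dots> = x [^] E \<otimes> u [^] E \<otimes> (A \<otimes> cm G x B \<otimes> c \<otimes> cm G u B)"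
      using Zcom[OF cZ, of "A \<otimes> cm G x B"] A B x by simp
    also have "\<dots> = x [^] E \<otimes> u [^] E \<otimes> (D \<otimes> z')"
      unfolding D_def z'_def using A B x uc cc by (simp add: m_assoc)
    also have "\<dots> = x [^] E \<otimes> (u [^] E \<otimes> z' \<otimes> D)"
      using Zcom[OF z'Z Dc] xE uE Dc z'c by (simp add: m_assoc)
    finally show ?thesis .
  qed
  have "x [^] E \<otimes> D = x [^] E \<otimes> (u [^] E \<otimes> z' \<otimes> D)" using eq fx fy by simp
  then have "D = u [^] E \<otimes> z' \<otimes> D" by (rule lcan[OF xE Dc m_closed[OF m_closed[OF uE z'c] Dc]])
  then have "u [^] E \<otimes> z' = \<one>" using Dc uE z'c by (metis m_closed r_cancel_one)
  then have "z' = inv (u [^] E)" by (rule inv_from_prod[OF uE z'c])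
  then have "u [^] E = inv z'" using uE by simp
  then have "u [^] E \<in> Z" using Z_inv[OF z'Z] by simp
  then have uZ: "u \<in> Z" by (rule coprime_Z[OF uc nd])
  have "y [^] E \<otimes> A \<otimes> cm G y B = x [^] E \<otimes> u [^] E \<otimes> A \<otimes> (cm G x B \<otimes> \<one>)"
    unfolding yu pow_central_int[OF x uZ] cm_mult_left[OF x uc B] cm_central_left[OF uZ B] ..
  also have "\<dots> = x [^] E \<otimes> D \<otimes> u [^] E"
    unfolding D_def using Zcom[OF Z_ipow[OF uZ], of "A \<otimes> cm G x B"] xE uE A B x by (simp add: m_assoc)
  finally have "x [^] E \<otimes> D \<otimes> u [^] E = x [^] E \<otimes> D" using eq fx by simp
  then have "u [^] E = \<one>" using xE Dc uE by (metis m_closed l_cancel_one)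
  then have "u = \<one>" by (rule coprime_one[OF uZ nd])
  then show "x = y" using yu x by simp
qed

end

context xsp begin

abbreviation P :: "nat \<Rightarrow> nat \<Rightarrow> (nat \<Rightarrow> 'a) set" where
  "P k i \<equiv> PiE {..<k} ((\<lambda>_. carrier G)(i:={\<one>}))"

abbreviation "ones k \<equiv> (\<lambda>j. if j < k then \<one> else undefined)"

lemma tuples_rel: "t \<in> tuples G k \<Longrightarrow> is_word k w \<Longrightarrow> \<forall>l\<in>set w. t (fst l) \<in> carrier G"
  by (auto simp: tuples_def is_word_def PiE_iff)

lemma tuples_rel': "t \<in> tuples G k \<Longrightarrow> is_word k w \<Longrightarrow> \<forall>l\<in>set w. fst l \<noteq> i \<longrightarrow> t (fst l) \<in> carrier G"
  using tuples_rel by blast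

lemma P_sub: "t \<in> P k i \<Longrightarrow> t \<in> tuples G k"
proof -
  assume t: "t \<in> P k i"
  have "P k i \<subseteq> tuples G k" unfolding tuples_def by (rule PiE_mono) simp
  then show ?thesis using t by blast
qed

lemma upd_tuples: "t \<in> tuples G k \<Longrightarrow> i < k \<Longrightarrow> x \<in> carrier G \<Longrightarrow> t(i:=x) \<in> tuples G k"
  by (auto simp: tuples_def PiE_iff extensional_def)

lemma ones_tuples: "ones k \<in> tuples G k"
  by (auto simp: tuples_def PiE_iff extensional_def)

lemma fin_tuples: "finite (tuples G k)"
  unfolding tuples_def using fin by (simp add: finite_PiE)

lemma card_tuples: "card (tuples G k) = card (carrier G) ^ k"
  unfolding tuples_def by (simp add: card_PiE)

lemma card_filter: "finite A \<Longrightarrow> card {x\<in>A. Q x} = (\<Sum>x\<in>A. if Q x then 1 else 0 :: nat)"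
  by (simp add: sum.inter_filter[symmetric])

lemma card_slice:
  assumes i: "i < k"
  shows "card {t\<in>tuples G k. Q t} = (\<Sum>t\<in>P k i. card {x\<in>carrier G. Q (t(i:=x))})"
proof -
  have "card {t\<in>tuples G k. Q t} = (\<Sum>t\<in>tuples G k. if Q t then 1 else 0 :: nat)"
    by (rule card_filter[OF fin_tuples])
  also have "\<dots> = (\<Sum>t\<in>P k i. \<Sum>x\<in>carrier G. if Q (t(i:=x)) then 1 else 0 :: nat)"
    unfolding tuples_def by (rule sum_slice) (use i in auto)
  also have "\<dots> = (\<Sum>t\<in>P k i. card {x\<in>carrier G. Q (t(i:=x))})"
    using card_filter[OF fin] by simp
  finally show ?thesis .
qed

lemma caseA:
  assumes wk: "is_word k w" and i: "i < k" and nd: "\<not> int p dvd expo i w" and g: "g \<in> carrier G"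
  shows "card {t\<in>tuples G k. word_eval G w t = g} = card (carrier G) ^ (k - 1)"
proof -
  have one: "card {x\<in>carrier G. word_eval G w (t(i:=x)) = g} = 1" if t: "t \<in> P k i" for t
  proof -
    have tt: "t \<in> tuples G k" using P_sub[OF t] .
    have rel: "\<forall>l\<in>set w. fst l \<noteq> i \<longrightarrow> t (fst l) \<in> carrier G" using tuples_rel'[OF tt wk] .
    define A where "A = word_eval G w (t(i:=\<one>))"
    define B where "B = Bf G i w t"
    define f where "f = (\<lambda>x. x [^] expo i w \<otimes> A \<otimes> cm G x B)"
    have Ac: "A \<in> carrier G" unfolding A_def
      by (rule word_eval_closed[OF tuples_rel[OF upd_tuples[OF tt i one_closed] wk]])
    have Bc: "B \<in> carrier G" unfolding B_def by (rule Bf_closed[OF rel])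
    have ev: "word_eval G w (t(i:=x)) = f x" if "x \<in> carrier G" for x
      unfolding f_def A_def B_def by (rule word_decomp[OF rel that])
    have inj: "inj_on f (carrier G)" unfolding f_def by (rule aff_inj[OF nd Ac Bc])
    have "f ` carrier G \<subseteq> carrier G" unfolding f_def using Ac Bc by auto
    then have im: "f ` carrier G = carrier G" using endo_inj_surj[OF fin _ inj] by blast
    then obtain x0 where x0: "x0 \<in> carrier G" "f x0 = g" using g by (metis imageE)
    have "{x\<in>carrier G. word_eval G w (t(i:=x)) = g} = {x0}"
    proof
      show "{x0} \<subseteq> {x\<in>carrier G. word_eval G w (t(i:=x)) = g}" using x0 ev by auto
      show "{x\<in>carrier G. word_eval G w (t(i:=x)) = g} \<subseteq> {x0}"
      proof
        fix x assume "x \<in> {x\<in>carrier G. word_eval G w (t(i:=x)) = g}"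
        then have x: "x \<in> carrier G" "f x = f x0" using ev x0 by auto
        then show "x \<in> {x0}" using inj x0(1) by (auto dest: inj_onD)
      qed
    qed
    then show ?thesis by simp
  qed
  have "card {t\<in>tuples G k. word_eval G w t = g} = (\<Sum>t\<in>P k i. card {x\<in>carrier G. word_eval G w (t(i:=x)) = g})"
    by (rule card_slice[OF i])
  also have "\<dots> = (\<Sum>t\<in>P k i. 1)" using one by simp
  also have "\<dots> = card (carrier G) ^ (k - 1)" using card_PiE_fix[OF i fin] by simp
  finally show ?thesis .
qed

end

context xsp begin

definition hh :: "nat \<Rightarrow> (nat \<times> bool) list \<Rightarrow> (nat \<Rightarrow> 'a) \<Rightarrow> 'a \<Rightarrow> 'a" where
  "hh i w t x = x [^] expo i w \<otimes> cm G x (Bf G i w t)"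

lemma imgZ:
  assumes wk: "is_word k w" and allp: "\<forall>i<k. int p dvd expo i w" and t: "t \<in> tuples G k"
  shows "word_eval G w t \<in> Z"
proof (rule coord_induct[where R="\<lambda>t. word_eval G w t \<in> Z", OF _ _ one_closed t])
  show "word_eval G w (ones k) \<in> Z"
    using wk Z_one by (subst word_eval_ones) (auto simp: is_word_def)
next
  fix t i x assume tt: "t \<in> tuples G k" and i: "i < k" and x: "x \<in> carrier G"
    and R: "word_eval G w (t(i:=\<one>)) \<in> Z"
  have rel: "\<forall>l\<in>set w. fst l \<noteq> i \<longrightarrow> t (fst l) \<in> carrier G" using tuples_rel'[OF tt wk] .
  have "word_eval G w (t(i:=x)) = x [^] expo i w \<otimes> word_eval G w (t(i:=\<one>)) \<otimes> cm G x (Bf G i w t)"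
    by (rule word_decomp[OF rel x])
  moreover have "x [^] expo i w \<in> Z" using pow_p_Z[OF x] allp i by simp
  moreover have "cm G x (Bf G i w t) \<in> Z" using cmZ[OF x Bf_closed[OF rel]] .
  ultimately show "word_eval G w (t(i:=x)) \<in> Z" using R by (simp add: Z_mult)
qed

lemma hh_Z:
  assumes "int p dvd expo i w" "x \<in> carrier G" "\<forall>l\<in>set w. fst l \<noteq> i \<longrightarrow> t (fst l) \<in> carrier G"
  shows "hh i w t x \<in> Z"
  unfolding hh_def using Z_mult[OF pow_p_Z[OF assms(2,1)] cmZ[OF assms(2) Bf_closed[OF assms(3)]]] .

lemma hh_mult:
  assumes d: "int p dvd expo i w" and x: "x \<in> carrier G" and y: "y \<in> carrier G"
    and rel: "\<forall>l\<in>set w. fst l \<noteq> i \<longrightarrow> t (fst l) \<in> carrier G"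
  shows "hh i w t (x \<otimes> y) = hh i w t x \<otimes> hh i w t y"
proof -
  define E where "E = expo i w"
  define B where "B = Bf G i w t"
  have Bc: "B \<in> carrier G" unfolding B_def by (rule Bf_closed[OF rel])
  have yE: "y [^] E \<in> Z" unfolding E_def using pow_p_Z[OF y d] .
  have "hh i w t (x \<otimes> y) = x [^] E \<otimes> y [^] E \<otimes> (cm G x B \<otimes> cm G y B)"
    unfolding hh_def E_def[symmetric] B_def[symmetric] pow_p_int[OF x y d[folded E_def]] cm_mult_left[OF x y Bc] ..
  also have "\<dots> = x [^] E \<otimes> (y [^] E \<otimes> cm G x B) \<otimes> cm G y B" using x y Bc by (simp add: m_assoc)
  also have "\<dots> = x [^] E \<otimes> (cm G x B \<otimes> y [^] E) \<otimes> cm G y B" using Zcom[OF yE, of "cm G x B"] x Bc by simp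
  also have "\<dots> = hh i w t x \<otimes> hh i w t y" unfolding hh_def E_def[symmetric] B_def[symmetric]
    using x y Bc by (simp add: m_assoc)
  finally show ?thesis .
qed

lemma ev_hh:
  assumes d: "int p dvd expo i w" and x: "x \<in> carrier G"
    and rel: "\<forall>l\<in>set w. fst l \<noteq> i \<longrightarrow> t (fst l) \<in> carrier G"
    and Ac: "word_eval G w (t(i:=\<one>)) \<in> carrier G"
  shows "word_eval G w (t(i:=x)) = word_eval G w (t(i:=\<one>)) \<otimes> hh i w t x"
proof -
  have xE: "x [^] expo i w \<in> Z" using pow_p_Z[OF x d] .
  have Bc: "Bf G i w t \<in> carrier G" by (rule Bf_closed[OF rel])
  show ?thesis unfolding word_decomp[OF rel x] hh_def
    using Zcom[OF xE Ac] Ac x Bc Zc[OF xE] by (simp add: m_assoc)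
qed

lemma cnt_good:
  assumes wk: "is_word k w" and d: "int p dvd expo i w" and t: "t \<in> tuples G k" and i: "i < k"
    and gZ: "g \<in> Z" and AZ: "word_eval G w (t(i:=\<one>)) \<in> Z"
    and x1: "x1 \<in> carrier G" "hh i w t x1 \<noteq> \<one>"
  shows "p * card {x\<in>carrier G. word_eval G w (t(i:=x)) = g} = card (carrier G)"
proof -
  have rel: "\<forall>l\<in>set w. fst l \<noteq> i \<longrightarrow> t (fst l) \<in> carrier G" using tuples_rel'[OF t wk] .
  define A where "A = word_eval G w (t(i:=\<one>))"
  have Ac: "A \<in> carrier G" unfolding A_def using Zc[OF AZ] .
  have gc: "g \<in> carrier G" using Zc[OF gZ] .
  have "{x\<in>carrier G. word_eval G w (t(i:=x)) = g} = {x\<in>carrier G. hh i w t x = inv A \<otimes> g}"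
  proof (rule Collect_cong, rule conj_cong[OF refl])
    fix x assume x: "x \<in> carrier G"
    have hc: "hh i w t x \<in> carrier G" using Zc[OF hh_Z[OF d x rel]] .
    have "word_eval G w (t(i:=x)) = A \<otimes> hh i w t x" unfolding A_def by (rule ev_hh[OF d x rel Zc[OF AZ]])
    moreover have "(A \<otimes> hh i w t x = g) \<longleftrightarrow> (hh i w t x = inv A \<otimes> g)"
    proof
      assume "A \<otimes> hh i w t x = g" then show "hh i w t x = inv A \<otimes> g" using Ac hc by (metis minvl)
    next
      assume "hh i w t x = inv A \<otimes> g" then show "A \<otimes> hh i w t x = g" using Ac gc by simp
    qed
    ultimately show "(word_eval G w (t(i:=x)) = g) = (hh i w t x = inv A \<otimes> g)" by simp
  qed
  also have "p * card \<dots> = card (carrier G)"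
  proof (rule fib)
    show "\<And>x. x \<in> carrier G \<Longrightarrow> hh i w t x \<in> Z" using hh_Z[OF d _ rel] .
    show "\<And>x y. x \<in> carrier G \<Longrightarrow> y \<in> carrier G \<Longrightarrow> hh i w t (x \<otimes> y) = hh i w t x \<otimes> hh i w t y"
      using hh_mult[OF d _ _ rel] .
    show "x1 \<in> carrier G" "hh i w t x1 \<noteq> \<one>" using x1 .
    show "inv A \<otimes> g \<in> Z" using Z_mult[OF Z_inv[OF AZ[folded A_def]] gZ] .
  qed
  finally show ?thesis .
qed

end

context xsp begin

lemma Bf_const:
  assumes wk: "is_word k w" and i: "i < k" and allc: "\<forall>j<k. j \<noteq> i \<longrightarrow> int p dvd cf i j w"
    and t: "t \<in> tuples G k"
  shows "\<exists>z\<in>Z. Bf G i w t = Bf G i w (ones k) \<otimes> z"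
proof (rule coord_induct[where R="\<lambda>t. \<exists>z\<in>Z. Bf G i w t = Bf G i w (ones k) \<otimes> z", OF _ _ one_closed t])
  have Bo: "Bf G i w (ones k) \<in> carrier G" by (rule Bf_closed[OF tuples_rel'[OF ones_tuples wk]])
  show "\<exists>z\<in>Z. Bf G i w (ones k) = Bf G i w (ones k) \<otimes> z" using Z_one Bo by (intro bexI[of _ \<one>]) auto
next
  fix t j x assume tt: "t \<in> tuples G k" and j: "j < k" and x: "x \<in> carrier G"
    and R: "\<exists>z\<in>Z. Bf G i w (t(j:=\<one>)) = Bf G i w (ones k) \<otimes> z"
  have Bo: "Bf G i w (ones k) \<in> carrier G" by (rule Bf_closed[OF tuples_rel'[OF ones_tuples wk]])
  obtain z0 where z0: "z0 \<in> Z" "Bf G i w (t(j:=\<one>)) = Bf G i w (ones k) \<otimes> z0" using R by blast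
  show "\<exists>z\<in>Z. Bf G i w (t(j:=x)) = Bf G i w (ones k) \<otimes> z"
  proof (cases "j = i")
    case True
    have "Bf G i w (t(j:=x)) = Bf G i w (t(j:=\<one>))" unfolding True by (simp only: Bf_upd_i)
    then have "Bf G i w (t(j:=x)) = Bf G i w (ones k) \<otimes> z0" using z0(2) by (rule trans)
    then show ?thesis using z0(1) by blast
  next
    case False
    have rel: "\<forall>l\<in>set w. fst l \<noteq> i \<longrightarrow> t (fst l) \<in> carrier G" using tuples_rel'[OF tt wk] .
    obtain z1 where z1: "z1 \<in> Z" "Bf G i w (t(j:=x)) = x [^] cf i j w \<otimes> Bf G i w (t(j:=\<one>)) \<otimes> z1"
      using Bmod[OF rel x False] by blast
    have xc: "x [^] cf i j w \<in> Z" using pow_p_Z[OF x] allc j False by simp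
    have "Bf G i w (t(j:=x)) = x [^] cf i j w \<otimes> (Bf G i w (ones k) \<otimes> z0) \<otimes> z1" using z1 z0 by simp
    also have "\<dots> = Bf G i w (ones k) \<otimes> (x [^] cf i j w \<otimes> z0 \<otimes> z1)"
      using Zlcom[OF xc Bo m_closed[OF Zc[OF z0(1)] Zc[OF z1(1)]]] Bo Zc[OF xc] Zc[OF z0(1)] Zc[OF z1(1)] by (simp add: m_assoc)
    finally show ?thesis using Z_mult[OF Z_mult[OF xc z0(1)] z1(1)] by blast
  qed
qed

lemma hh_const:
  assumes wk: "is_word k w" and i: "i < k" and allc: "\<forall>j<k. j \<noteq> i \<longrightarrow> int p dvd cf i j w"
    and t: "t \<in> tuples G k" and x: "x \<in> carrier G"
  shows "hh i w t x = hh i w (ones k) x"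
proof -
  obtain z where z: "z \<in> Z" "Bf G i w t = Bf G i w (ones k) \<otimes> z" using Bf_const[OF wk i allc t] by blast
  have Bo: "Bf G i w (ones k) \<in> carrier G" by (rule Bf_closed[OF tuples_rel'[OF ones_tuples wk]])
  have "cm G x (Bf G i w t) = cm G x (Bf G i w (ones k))"
    unfolding z(2) cm_mult_right[OF x Bo Zc[OF z(1)]] cm_central_right[OF z(1) x] using x Bo by simp
  then show ?thesis unfolding hh_def by simp
qed

lemma caseB2:
  assumes wk: "is_word k w" and k1: "k \<ge> 1" and allp: "\<forall>i<k. int p dvd expo i w"
    and allc: "\<forall>i<k. \<forall>j<k. j \<noteq> i \<longrightarrow> int p dvd cf i j w"
    and t0: "t0 \<in> tuples G k"
  shows "card {t\<in>tuples G k. word_eval G w t = word_eval G w t0} \<ge> card (carrier G) ^ (k - 1)"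
proof -
  define g where "g = word_eval G w t0"
  have gZ: "g \<in> Z" unfolding g_def by (rule imgZ[OF wk allp t0])
  show ?thesis
  proof (cases "\<exists>i<k. \<exists>x1\<in>carrier G. hh i w (ones k) x1 \<noteq> \<one>")
    case True
    then obtain i x1 where i: "i < k" and x1: "x1 \<in> carrier G" "hh i w (ones k) x1 \<noteq> \<one>" by blast
    have ge: "card {x\<in>carrier G. word_eval G w (t(i:=x)) = g} \<ge> 1" if t: "t \<in> P k i" for t
    proof -
      have tt: "t \<in> tuples G k" using P_sub[OF t] .
      have AZ: "word_eval G w (t(i:=\<one>)) \<in> Z" using imgZ[OF wk allp upd_tuples[OF tt i one_closed]] .
      have x1': "hh i w t x1 \<noteq> \<one>" using hh_const[OF wk i _ tt x1(1)] allc i x1(2) by simp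
      have "p * card {x\<in>carrier G. word_eval G w (t(i:=x)) = g} = card (carrier G)"
        using cnt_good[OF wk _ tt i gZ AZ x1(1) x1'] allp i by simp
      moreover have "card (carrier G) > 0" using big prime_ge_2_nat[OF prime_p] by linarith
      ultimately have "card {x\<in>carrier G. word_eval G w (t(i:=x)) = g} \<noteq> 0" by (intro notI) simp
      then show ?thesis by linarith
    qed
    have "card (carrier G) ^ (k - 1) = (\<Sum>t\<in>P k i. 1)" using card_PiE_fix[OF i fin] by simp
    also have "\<dots> \<le> (\<Sum>t\<in>P k i. card {x\<in>carrier G. word_eval G w (t(i:=x)) = g})"
      by (rule sum_mono) (rule ge)
    also have "\<dots> = card {t\<in>tuples G k. word_eval G w t = g}" by (rule card_slice[OF i, symmetric])
    finally show ?thesis unfolding g_def .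
  next
    case False
    have triv: "word_eval G w t = \<one>" if t: "t \<in> tuples G k" for t
    proof (rule coord_induct[where R="\<lambda>t. word_eval G w t = \<one>", OF _ _ one_closed t])
      show "word_eval G w (ones k) = \<one>" using wk by (subst word_eval_ones) (auto simp: is_word_def)
    next
      fix t i x assume tt: "t \<in> tuples G k" and i: "i < k" and x: "x \<in> carrier G"
        and R: "word_eval G w (t(i:=\<one>)) = \<one>"
      have rel: "\<forall>l\<in>set w. fst l \<noteq> i \<longrightarrow> t (fst l) \<in> carrier G" using tuples_rel'[OF tt wk] .
      have "hh i w t x = hh i w (ones k) x" using hh_const[OF wk i _ tt x] allc i by simp
      also have "\<dots> = \<one>" using False i x by blast
      finally have "hh i w t x = \<one>" .
      then show "word_eval G w (t(i:=x)) = \<one>"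
        using ev_hh[OF _ x rel] allp i R by simp
    qed
    have g1: "g = \<one>" unfolding g_def by (rule triv[OF t0])
    have "{t\<in>tuples G k. word_eval G w t = g} = tuples G k" using triv g1 by blast
    then have "card {t\<in>tuples G k. word_eval G w t = g} = card (carrier G) ^ k" using card_tuples by simp
    moreover have "card (carrier G) ^ (k - 1) \<le> card (carrier G) ^ k"
    proof -
      have "card (carrier G) \<ge> 1" using big prime_ge_2_nat[OF prime_p] by linarith
      then show ?thesis by (rule power_increasing[rotated]) simp
    qed
    ultimately show ?thesis unfolding g_def by simp
  qed
qed

end

context xsp begin

lemma bad_small:
  assumes wk: "is_word k w" and i: "i < k" and j: "j < k" and ji: "j \<noteq> i"
    and nd: "\<not> int p dvd cf i j w" and d: "int p dvd expo i w" and t: "t \<in> tuples G k"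
  shows "card {y\<in>carrier G. \<forall>x\<in>carrier G. hh i w (t(j:=y)) x = \<one>} \<le> p"
proof (cases "{y\<in>carrier G. \<forall>x\<in>carrier G. hh i w (t(j:=y)) x = \<one>} = {}")
  case True show ?thesis by (subst True) simp
next
  case False
  define Bad where "Bad = {y\<in>carrier G. \<forall>x\<in>carrier G. hh i w (t(j:=y)) x = \<one>}"
  obtain y1 where y1: "y1 \<in> Bad" using False unfolding Bad_def by blast
  have y1c: "y1 \<in> carrier G" using y1 unfolding Bad_def by simp
  have rel: "\<forall>l\<in>set w. fst l \<noteq> i \<longrightarrow> t (fst l) \<in> carrier G" using tuples_rel'[OF t wk] .
  define c where "c = cf i j w"
  define B1 where "B1 = Bf G i w (t(j:=\<one>))"
  have B1c: "B1 \<in> carrier G" unfolding B1_def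
    by (rule Bf_closed[OF tuples_rel'[OF upd_tuples[OF t j one_closed] wk]])
  have cmB: "cm G x (Bf G i w (t(j:=y))) = cm G x (y [^] c) \<otimes> cm G x B1"
    if x: "x \<in> carrier G" and y: "y \<in> carrier G" for x y
  proof -
    obtain z where z: "z \<in> Z" "Bf G i w (t(j:=y)) = y [^] c \<otimes> B1 \<otimes> z"
      using Bmod[OF rel y ji] unfolding c_def B1_def by blast
    show ?thesis unfolding z(2) cm_mult_right[OF x m_closed[OF int_pow_closed[OF y] B1c] Zc[OF z(1)]]
      cm_mult_right[OF x int_pow_closed[OF y] B1c] cm_central_right[OF z(1) x]
      using x y B1c by simp
  qed
  have sub: "Bad \<subseteq> (\<lambda>z. y1 \<otimes> z) ` Z"
  proof
    fix y assume yB: "y \<in> Bad"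
    have yc: "y \<in> carrier G" using yB unfolding Bad_def by simp
    have eqc: "cm G x (y [^] c) = cm G x (y1 [^] c)" if x: "x \<in> carrier G" for x
    proof -
      have rely: "\<forall>l\<in>set w. fst l \<noteq> i \<longrightarrow> (t(j:=y)) (fst l) \<in> carrier G"
        using tuples_rel'[OF upd_tuples[OF t j yc] wk] .
      have rely1: "\<forall>l\<in>set w. fst l \<noteq> i \<longrightarrow> (t(j:=y1)) (fst l) \<in> carrier G"
        using tuples_rel'[OF upd_tuples[OF t j y1c] wk] .
      have "hh i w (t(j:=y)) x = hh i w (t(j:=y1)) x" using yB y1 x unfolding Bad_def by simp
      then have "cm G x (Bf G i w (t(j:=y))) = cm G x (Bf G i w (t(j:=y1)))"
        unfolding hh_def by (rule lcan[OF int_pow_closed[OF x] cm_closed[OF x Bf_closed[OF rely]] cm_closed[OF x Bf_closed[OF rely1]]])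
      then have "cm G x (y [^] c) \<otimes> cm G x B1 = cm G x (y1 [^] c) \<otimes> cm G x B1"
        unfolding cmB[OF x yc] cmB[OF x y1c] .
      then show ?thesis by (rule rcan[OF cm_closed[OF x B1c] cm_closed[OF x int_pow_closed[OF yc]] cm_closed[OF x int_pow_closed[OF y1c]]])
    qed
    define u where "u = inv y1 \<otimes> y"
    have uc: "u \<in> carrier G" unfolding u_def using yc y1c by simp
    obtain c' where c': "c' \<in> Z" "u [^] c = inv y1 [^] c \<otimes> y [^] c \<otimes> c'"
      using pow_int_mult_Z[OF inv_closed[OF y1c] yc, of c] unfolding u_def by blast
    have "u [^] c \<otimes> inv \<one> \<in> Z"
    proof (rule cm_eq_center)
      show "u [^] c \<in> carrier G" using uc by simp
      show "\<one> \<in> carrier G" by simp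
      fix x assume x: "x \<in> carrier G"
      have "cm G x (u [^] c) = cm G x (inv y1 [^] c) \<otimes> cm G x (y [^] c) \<otimes> cm G x c'"
        unfolding c'(2) using cm_mult_right x y1c yc Zc[OF c'(1)] by simp
      also have "\<dots> = inv (cm G x (y1 [^] c)) \<otimes> cm G x (y1 [^] c)"
        unfolding eqc[OF x] cm_central_right[OF c'(1) x] using x y1c
        by (simp add: int_pow_inv cm_inv_right)
      also have "\<dots> = \<one>" using x y1c by simp
      finally show "cm G x (u [^] c) = cm G x \<one>" using x by simp
    qed
    then have "u [^] c \<in> Z" using uc by simp
    then have uZ: "u \<in> Z" using coprime_Z[OF uc nd[folded c_def]] by simp
    have "y = y1 \<otimes> u" unfolding u_def using yc y1c by (simp add: m_assoc[symmetric])
    then show "y \<in> (\<lambda>z. y1 \<otimes> z) ` Z" using uZ by blast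
  qed
  have "card Bad \<le> card ((\<lambda>z. y1 \<otimes> z) ` Z)" by (rule card_mono[OF finite_imageI[OF finZ] sub])
  also have "\<dots> \<le> card Z" by (rule card_image_le[OF finZ])
  finally show ?thesis unfolding Bad_def using cardZ by simp
qed

end

context xsp begin

lemma caseB1:
  assumes wk: "is_word k w" and allp: "\<forall>i<k. int p dvd expo i w"
    and i: "i < k" and j: "j < k" and ji: "j \<noteq> i" and nd: "\<not> int p dvd cf i j w"
    and t0: "t0 \<in> tuples G k"
  shows "card {t\<in>tuples G k. word_eval G w t = word_eval G w t0} \<ge> card (carrier G) ^ (k - 1)"
proof -
  define g where "g = word_eval G w t0"
  define N where "N = card (carrier G)"
  have gZ: "g \<in> Z" unfolding g_def by (rule imgZ[OF wk allp t0])
  have d: "int p dvd expo i w" using allp i by simp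
  have p0: "p > 0" using prime_ge_2_nat[OF prime_p] by simp
  have Nbig: "2 * p \<le> N" unfolding N_def by (rule big)
  define cnt where "cnt = (\<lambda>t. card {x\<in>carrier G. word_eval G w (t(i:=x)) = g})"
  define PP where "PP = PiE {..<k} (((\<lambda>_. carrier G)(i:={\<one>}))(j:={\<one>}))"
  have "card {t\<in>tuples G k. word_eval G w t = g} = (\<Sum>t\<in>P k i. cnt t)"
    unfolding cnt_def by (rule card_slice[OF i])
  also have "\<dots> = (\<Sum>t\<in>PP. \<Sum>y\<in>((\<lambda>_. carrier G)(i:={\<one>})) j. cnt (t(j:=y)))"
    unfolding PP_def by (rule sum_slice) (use j ji in auto)
  also have "\<dots> = (\<Sum>t\<in>PP. \<Sum>y\<in>carrier G. cnt (t(j:=y)))" using ji by simp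
  finally have S: "card {t\<in>tuples G k. word_eval G w t = g} = (\<Sum>t\<in>PP. \<Sum>y\<in>carrier G. cnt (t(j:=y)))" .
  have inner: "(\<Sum>y\<in>carrier G. cnt (t(j:=y))) \<ge> N" if t: "t \<in> PP" for t
  proof -
    have "PP \<subseteq> tuples G k" unfolding PP_def tuples_def by (rule PiE_mono) simp
    then have tt: "t \<in> tuples G k" using t by blast
    define Bad where "Bad = {y\<in>carrier G. \<forall>x\<in>carrier G. hh i w (t(j:=y)) x = \<one>}"
    define Good where "Good = carrier G - Bad"
    have cb: "card Bad \<le> p" unfolding Bad_def by (rule bad_small[OF wk i j ji nd d tt])
    have Bsub: "Bad \<subseteq> carrier G" unfolding Bad_def by blast
    have cg: "card Good = N - card Bad" unfolding Good_def N_def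
      using card_Diff_subset[OF finite_subset[OF Bsub fin] Bsub] .
    have good: "p * cnt (t(j:=y)) = N" if y: "y \<in> Good" for y
    proof -
      have yc: "y \<in> carrier G" and nb: "y \<notin> Bad" using y unfolding Good_def by auto
      then obtain x1 where x1: "x1 \<in> carrier G" "hh i w (t(j:=y)) x1 \<noteq> \<one>" unfolding Bad_def by blast
      have ty: "t(j:=y) \<in> tuples G k" by (rule upd_tuples[OF tt j yc])
      have AZ: "word_eval G w ((t(j:=y))(i:=\<one>)) \<in> Z" using imgZ[OF wk allp upd_tuples[OF ty i one_closed]] .
      show ?thesis unfolding cnt_def N_def by (rule cnt_good[OF wk d ty i gZ AZ x1])
    qed
    have "p * (\<Sum>y\<in>carrier G. cnt (t(j:=y))) \<ge> p * (\<Sum>y\<in>Good. cnt (t(j:=y)))"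
      by (intro mult_le_mono2 sum_mono2) (use fin in \<open>auto simp: Good_def\<close>)
    moreover have "p * (\<Sum>y\<in>Good. cnt (t(j:=y))) = (\<Sum>y\<in>Good. N)"
      unfolding sum_distrib_left using good by simp
    moreover have "(\<Sum>y\<in>Good. N) = (N - card Bad) * N" using cg by simp
    moreover have "(N - card Bad) * N \<ge> p * N" using cb Nbig by (intro mult_le_mono1) linarith
    ultimately have "p * (\<Sum>y\<in>carrier G. cnt (t(j:=y))) \<ge> p * N" by linarith
    then show ?thesis using p0 by simp
  qed
  have "N ^ (k - 1) = card PP * N"
  proof -
    have "card PP = N ^ (k - 2)" unfolding PP_def N_def using card_PiE_fix2[OF i j ji[symmetric] fin] by simp
    moreover have "k \<ge> 2" using i j ji by linarith
    then obtain m where m: "k = m + 2" by (metis le_add_diff_inverse2)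
    ultimately show ?thesis by (simp add: power_Suc2)
  qed
  also have "\<dots> = (\<Sum>t\<in>PP. N)" by simp
  also have "\<dots> \<le> (\<Sum>t\<in>PP. \<Sum>y\<in>carrier G. cnt (t(j:=y)))" by (rule sum_mono) (rule inner)
  finally show ?thesis unfolding g_def[symmetric] N_def[symmetric] S .
qed

end

context xsp begin

lemma main_count:
  assumes wk: "is_word k w" and k1: "k \<ge> 1" and t0: "t0 \<in> tuples G k"
  shows "card {t\<in>tuples G k. word_eval G w t = word_eval G w t0} \<ge> card (carrier G) ^ (k - 1)"
proof (cases "\<exists>i<k. \<not> int p dvd expo i w")
  case True
  then obtain i where i: "i < k" "\<not> int p dvd expo i w" by blast
  have "word_eval G w t0 \<in> carrier G" by (rule word_eval_closed[OF tuples_rel[OF t0 wk]])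
  then show ?thesis using caseA[OF wk i] by simp
next
  case False
  then have allp: "\<forall>i<k. int p dvd expo i w" by blast
  show ?thesis
  proof (cases "\<exists>i<k. \<exists>j<k. j \<noteq> i \<and> \<not> int p dvd cf i j w")
    case True
    then obtain i j where "i < k" "j < k" "j \<noteq> i" "\<not> int p dvd cf i j w" by blast
    then show ?thesis using caseB1[OF wk allp _ _ _ _ t0] by blast
  next
    case False
    then have "\<forall>i<k. \<forall>j<k. j \<noteq> i \<longrightarrow> int p dvd cf i j w" by blast
    then show ?thesis using caseB2[OF wk k1 allp _ t0] by blast
  qed
qed

lemma aa: "amit_ashurst G"
  unfolding amit_ashurst_def
proof (intro allI impI ballI)
  fix k w x assume k1: "1 \<le> k" and wk: "is_word k w" and x: "x \<in> word_image G k w"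
  then obtain t0 where t0: "t0 \<in> tuples G k" and xe: "x = word_eval G w t0" unfolding word_image_def by blast
  define N where "N = card (carrier G)"
  have N0: "N > 0" unfolding N_def using big prime_ge_2_nat[OF prime_p] by linarith
  have c: "real (card {t\<in>tuples G k. word_eval G w t = x}) \<ge> real N ^ (k - 1)"
    using main_count[OF wk k1 t0] unfolding xe N_def by (metis of_nat_le_iff of_nat_power)
  have Nk: "real N ^ k = real N ^ (k - 1) * real N" using k1 by (metis Suc_diff_1 less_le_trans zero_less_one power_Suc2 Suc_le_lessD)
  have "1 / real N = real N ^ (k - 1) / real N ^ k" using N0 Nk by simp
  also have "\<dots> \<le> real (card {t\<in>tuples G k. word_eval G w t = x}) / real N ^ k"
    using c N0 by (intro divide_right_mono) auto
  finally show "1 / real (card (carrier G)) \<le> word_prob G k w x" unfolding word_prob_def N_def .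
qed

end

lemma extraction:
  fixes G :: "('a, 'b) monoid_scheme" (structure)
  assumes pr: "Factorial_Ring.prime p" and od: "odd p" and ex: "extraspecial_p_group p G"
  shows "xsp G p"
proof -
  have sp: "special_p_group p G" and cardZ: "card (grp_center G) = p"
    using ex unfolding extraspecial_p_group_def by auto
  have pg: "p_group p G" and der: "derived G (carrier G) = grp_center G"
    and eaZ: "elem_abelian p (subgroup_generated G (grp_center G))"
    and eaQ: "elem_abelian p (G Mod grp_center G)"
    using sp unfolding special_p_group_def by auto
  have grp: "group G" and fin: "finite (carrier G)" using pg unfolding p_group_def by auto
  interpret group G by (rule grp)
  have Zsub: "subgroup (grp_center G) G" by (rule center_subgroup)
  have Znorm: "grp_center G \<lhd> G" by (rule center_normal)
  have cmZ: "cm G a b \<in> grp_center G" if a: "a \<in> carrier G" and b: "b \<in> carrier G" for a b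
  proof -
    have "cm G a b = inv a \<otimes> inv b \<otimes> inv (inv a) \<otimes> inv (inv b)" unfolding cm_def using a b by simp
    then have "cm G a b \<in> derived_set G (carrier G)" using a b by blast
    then have "cm G a b \<in> derived G (carrier G)" unfolding derived_def by (rule generate.incl)
    then show ?thesis using der by simp
  qed
  have powZ: "x [^] p \<in> grp_center G" if x: "x \<in> carrier G" for x
  proof -
    have "grp_center G #> x \<in> carrier (G Mod grp_center G)" using x unfolding carrier_FactGroup by blast
    then have "(grp_center G #> x) [^]\<^bsub>G Mod grp_center G\<^esub> p = \<one>\<^bsub>G Mod grp_center G\<^esub>"
      using eaQ unfolding elem_abelian_def by blast
    then have "grp_center G #> (x [^] p) = grp_center G"
      using normal.FactGroup_pow[OF Znorm x] by simp
    moreover have "x [^] p \<in> grp_center G #> (x [^] p)" using rcos_self[OF nat_pow_closed[OF x] Zsub] .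
    ultimately show ?thesis by simp
  qed
  have Zp: "z [^] p = \<one>" if z: "z \<in> grp_center G" for z
  proof -
    have "z \<in> carrier (subgroup_generated G (grp_center G))"
      using z subgroup.carrier_subgroup_generated_subgroup[OF Zsub] by simp
    then have "z [^]\<^bsub>subgroup_generated G (grp_center G)\<^esub> p = \<one>\<^bsub>subgroup_generated G (grp_center G)\<^esub>"
      using eaZ unfolding elem_abelian_def by blast
    then show ?thesis by (simp add: pow_subgroup_generated)
  qed
  have p2: "p \<ge> 2" using pr by (simp add: prime_ge_2_nat)
  have big: "2 * p \<le> card (carrier G)"
  proof -
    have ne: "grp_center G \<noteq> carrier G"
    proof
      assume eq: "grp_center G = carrier G"
      have "derived_set G (carrier G) \<subseteq> {\<one>}"
      proof
        fix c assume "c \<in> derived_set G (carrier G)"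
        then obtain a b where a: "a \<in> carrier G" and b: "b \<in> carrier G"
          and c: "c = a \<otimes> b \<otimes> inv a \<otimes> inv b" by blast
        have aZ: "a \<in> grp_center G" using a eq by simp
        have "a \<otimes> b = b \<otimes> a" using center_memD[OF aZ b] .
        then have "c = b \<otimes> a \<otimes> inv a \<otimes> inv b" using c by simp
        then show "c \<in> {\<one>}" using a b by (simp add: m_assoc)
      qed
      then have "derived G (carrier G) \<subseteq> {\<one>}"
        unfolding derived_def by (rule generate_subgroup_incl[OF _ triv_subgroup])
      then have "card (grp_center G) \<le> card {\<one>}" using der by (intro card_mono) auto
      then have "card (grp_center G) \<le> 1" by simp
      then show False using cardZ p2 by simp
    qed
    have sub: "grp_center G \<subset> carrier G" by (rule psubsetI[OF center_sub ne])
    have "card (rcosets (grp_center G)) * p = card (carrier G)"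
      using lagrange[OF Zsub] cardZ unfolding order_def by simp
    moreover have "card (grp_center G) < card (carrier G)" by (rule psubset_card_mono[OF fin sub])
    ultimately have r: "card (rcosets (grp_center G)) * p = card (carrier G)" "p < card (carrier G)"
      using cardZ by auto
    define r where "r = card (rcosets (grp_center G))"
    have "r \<noteq> 0" using r p2 unfolding r_def by (intro notI) simp
    moreover have "r \<noteq> 1" using r unfolding r_def by (intro notI) simp
    ultimately have "r \<ge> 2" by linarith
    then have "2 * p \<le> r * p" by (rule mult_le_mono1)
    then show ?thesis using r unfolding r_def by simp
  qed
  show ?thesis
  proof (unfold_locales)
    show "Factorial_Ring.prime p" by (rule pr)
    show "odd p" by (rule od)
    show "finite (carrier G)" by (rule fin)
    show "\<And>a b. a \<in> carrier G \<Longrightarrow> b \<in> carrier G \<Longrightarrow> cm G a b \<in> grp_center G" by (rule cmZ)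
    show "\<And>x. x \<in> carrier G \<Longrightarrow> x [^] p \<in> grp_center G" by (rule powZ)
    show "\<And>z. z \<in> grp_center G \<Longrightarrow> z [^] p = \<one>" by (rule Zp)
    show "card (grp_center G) = p" by (rule cardZ)
    show "2 * p \<le> card (carrier G)" by (rule big)
  qed
qed

theorem corollary3p3:
  fixes G :: "('a, 'b) monoid_scheme" and p :: nat
  assumes "Factorial_Ring.prime p" and "odd p" and "extraspecial_p_group p G"
  shows "amit_ashurst G"
proof -
  interpret xsp G p by (rule extraction[OF assms])
  show ?thesis by (rule aa)
qed

end
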